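(* Let $\mathbf f=(f_1,\dots,f_n)\in\mathcal G_0^n$. (1) If $\mathbf f\in\mathcal{LIN}_n$, then the interior $L_{\mathbf f}(\mathcal G_0)^\circ$ (in $\mathbb R^n$) is a convex set containing $0$, and $$L_{\mathbf f}(\mathcal G_0)^\circ=L_{\mathbf f}\big(\{g\in\mathcal G_0:(f_1,\dots,f_n,g)\in\mathcal{LIN}_{n+1}\}\big)^\circ .$$ (2) If $\mathbf f\in\mathcal{LIN}_n^+$, then $L_{\mathbf f}(\mathcal G_{00})^\circ$ is a convex subset of $\mathbb R^n$ containing $0$, and $$L_{\mathbf f}(\mathcal G_0)^\circ=L_{\mathbf f}\big(\{g\in\mathcal G_0:(f_1,\dots,f_n,g)\in\mathcal{LIN}_{n+1}^+\}\big)^\circ .$$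
   Context: Let $\mathcal G$ be the group of strictly increasing continuous maps $f:[-1,1]\to[-1,1]$ with $f(\pm1)=\pm1$, $i$ the identity, $\mathcal G_0=\{f\in\mathcal G:\int_{-1}^1 f=0\}$, $\mathcal G_{00}$ the odd elements of $\mathcal G$. For a continuous $f$ on $[-1,1]$ let $f^e(t)=\tfrac12(f(t)+f(-t))$ (its even part). $\mathcal{LIN}_n$ is the set of $(f_1,\dots,f_n)\in\mathcal G_0^n$ such that $\{i,f_1,\dots,f_n\}$ is linearly independent in $C([-1,1])$; $\mathcal{LIN}_n^+$ is the set of $(f_1,\dots,f_n)\in\mathcal G_0^n$ such that $\{f_1^e,\dots,f_n^e\}$ is linearly independent. For $\mathbf f\in\mathcal G^n$ the linear map $L_{\mathbf f}:C([-1,1])\to\mathbb R^n$ is $L_{\mathbf f}(g)=\big(\int_{-1}^1 g(f_1^{-1}(t))\,dt,\dots,\int_{-1}^1 g(f_n^{-1}(t))\,dt\big)$. *)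

theory Defs
  imports "HOL-Analysis.Analysis"
begin

text \<open>Functions on [-1,1] are represented as real => real; only their values on
  [-1,1] matter.\<close>

definition GG :: "(real \<Rightarrow> real) set" where
  "GG = {f. continuous_on {-1..1} f \<and> strict_mono_on {-1..1} f \<and>
           f (-1) = -1 \<and> f 1 = 1 \<and> f ` {-1..1} \<subseteq> {-1..1}}"

definition GG0 :: "(real \<Rightarrow> real) set" where
  "GG0 = {f \<in> GG. integral {-1..1} f = 0}"

definition GG00 :: "(real \<Rightarrow> real) set" where
  "GG00 = {f \<in> GG. \<forall>t\<in>{-1..1}. f (-t) = - f t}"

definition ident :: "real \<Rightarrow> real" where
  "ident t = t"

definition even_part :: "(real \<Rightarrow> real) \<Rightarrow> real \<Rightarrow> real" where
  "even_part f t = (f t + f (-t)) / 2"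

definition lin_indep_fam :: "('i::finite \<Rightarrow> real \<Rightarrow> real) \<Rightarrow> bool" where
  "lin_indep_fam F \<longleftrightarrow>
     (\<forall>c :: 'i \<Rightarrow> real. (\<forall>t\<in>{-1..1}. (\<Sum>j\<in>UNIV. c j * F j t) = 0) \<longrightarrow> (\<forall>j. c j = 0))"

definition LIN :: "('n::finite \<Rightarrow> real \<Rightarrow> real) \<Rightarrow> bool" where
  "LIN f \<longleftrightarrow> (\<forall>j. f j \<in> GG0) \<and>
     lin_indep_fam (\<lambda>k :: 'n option. case k of None \<Rightarrow> ident | Some j \<Rightarrow> f j)"

definition LINp :: "('n::finite \<Rightarrow> real \<Rightarrow> real) \<Rightarrow> bool" where
  "LINp f \<longleftrightarrow> (\<forall>j. f j \<in> GG0) \<and> lin_indep_fam (\<lambda>j. even_part (f j))"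

text \<open>The (n+1)-tuple (f_1, ..., f_n, g), indexed by 'n option (None = last slot).\<close>
definition ext_tuple :: "('n \<Rightarrow> real \<Rightarrow> real) \<Rightarrow> (real \<Rightarrow> real) \<Rightarrow> 'n option \<Rightarrow> real \<Rightarrow> real" where
  "ext_tuple f g k = (case k of None \<Rightarrow> g | Some j \<Rightarrow> f j)"

definition Lmap :: "('n::finite \<Rightarrow> real \<Rightarrow> real) \<Rightarrow> (real \<Rightarrow> real) \<Rightarrow> real ^ 'n" where
  "Lmap f g = (\<chi> j. integral {-1..1} (\<lambda>t. g (inv_into {-1..1} (f j) t)))"

end

theory Submission
  imports Defs "HOL-Library.Function_Algebras"
begin


abbreviation finv :: "(real \<Rightarrow> real) \<Rightarrow> real \<Rightarrow> real" where
  "finv f \<equiv> inv_into {-1..1} f"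

lemma GG_D:
  assumes "f \<in> GG"
  shows "continuous_on {-1..1} f" "strict_mono_on {-1..1} f" "f (-1) = -1" "f 1 = 1"
    "f ` {-1..1} \<subseteq> {-1..1}"
  using assms by (auto simp: GG_def)

lemma GG_image:
  assumes "f \<in> GG" shows "f ` {-1..1} = {-1..1}"
proof
  show "f ` {-1..1} \<subseteq> {-1..1}" using GG_D[OF assms] by auto
  show "{-1..1} \<subseteq> f ` {-1..1}"
  proof
    fix y :: real assume y: "y \<in> {-1..1}"
    have "\<exists>x. -1 \<le> x \<and> x \<le> 1 \<and> f x = y"
      by (rule IVT') (use GG_D[OF assms] y in auto)
    then show "y \<in> f ` {-1..1}" by auto
  qed
qed

lemma GG_inj: "f \<in> GG \<Longrightarrow> inj_on f {-1..1}"
  using GG_D(2) strict_mono_on_imp_inj_on by blast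

lemma GG_inv:
  assumes "f \<in> GG" "t \<in> {-1..1}"
  shows "finv f t \<in> {-1..1}" "f (finv f t) = t"
proof -
  have "t \<in> f ` {-1..1}" using GG_image[OF assms(1)] assms(2) by simp
  then show "finv f t \<in> {-1..1}" "f (finv f t) = t" by (rule inv_into_into, rule f_inv_into_f)
qed

lemma GG_inv_le:
  assumes "f \<in> GG" "t \<in> {-1..1}" "a \<in> {-1..1}"
  shows "finv f t \<le> a \<longleftrightarrow> t \<le> f a"
proof -
  have m: "strict_mono_on {-1..1} f" using GG_D[OF assms(1)] by auto
  have "finv f t \<le> a \<longleftrightarrow> f (finv f t) \<le> f a"
    using strict_mono_on_leD[OF m] strict_mono_onD[OF m] GG_inv(1)[OF assms(1,2)] assms(3)
    by (smt (verit))
  then show ?thesis using GG_inv(2)[OF assms(1,2)] by simp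
qed

lemma GG_inv_cont:
  assumes "f \<in> GG" shows "continuous_on {-1..1} (finv f)"
proof -
  have "continuous_on (f ` {-1..1}) (finv f)"
    by (rule continuous_on_inv) (use GG_D[OF assms] GG_inj[OF assms] in \<open>auto simp: inv_into_f_f\<close>)
  then show ?thesis using GG_image[OF assms] by simp
qed

lemma cont_comp_inv:
  assumes "f \<in> GG" "continuous_on {-1..1} g"
  shows "continuous_on {-1..1} (\<lambda>t. g (finv f t))"
  by (rule continuous_on_compose2[OF assms(2) GG_inv_cont[OF assms(1)]]) (use GG_inv[OF assms(1)] in auto)



lemma intcont: "continuous_on {a..b} (g::real\<Rightarrow>real) \<Longrightarrow> g integrable_on {a..b}"
  by (rule integrable_continuous_interval)

lemma intcont_sub: "continuous_on {a..b} (g::real\<Rightarrow>real) \<Longrightarrow> a \<le> c \<Longrightarrow> d \<le> b \<Longrightarrow> g integrable_on {c..d}"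
  by (rule integrable_continuous_interval) (erule continuous_on_subset, auto)

lemma integral_split:
  assumes "continuous_on {a..b} (g::real\<Rightarrow>real)" "a \<le> c" "c \<le> b"
  shows "integral {a..b} g = integral {a..c} g + integral {c..b} g"
  using Henstock_Kurzweil_Integration.integral_combine[OF assms(2,3) intcont[OF assms(1)]] by simp

lemma int_upper:
  assumes "continuous_on {lo..hi} (D::real\<Rightarrow>real)" "lo \<le> c" "c \<le> hi"
    "\<forall>t\<in>{lo..c}. D t \<le> 0" "\<forall>t\<in>{c..hi}. D t \<le> K"
  shows "integral {lo..hi} D \<le> K * (hi - c)"
proof -
  have "integral {lo..c} D \<le> integral {lo..c} (\<lambda>_. 0)"
    by (rule integral_le) (use assms intcont_sub[OF assms(1)] in auto)
  moreover have "integral {c..hi} D \<le> integral {c..hi} (\<lambda>_. K)"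
    by (rule integral_le) (use assms intcont_sub[OF assms(1)] in auto)
  ultimately show ?thesis using integral_split[OF assms(1-3)] assms(3) by (simp add: mult.commute)
qed

lemma int_lower:
  assumes "continuous_on {lo..hi} (D::real\<Rightarrow>real)" "lo \<le> c" "c \<le> hi"
    "\<forall>t\<in>{lo..c}. D t \<ge> 0" "\<forall>t\<in>{c..hi}. D t \<ge> K"
  shows "integral {lo..hi} D \<ge> K * (hi - c)"
proof -
  have "integral {lo..c} D \<ge> integral {lo..c} (\<lambda>_. 0)"
    by (rule integral_le) (use assms intcont_sub[OF assms(1)] in auto)
  moreover have "integral {c..hi} D \<ge> integral {c..hi} (\<lambda>_. K)"
    by (rule integral_le) (use assms intcont_sub[OF assms(1)] in auto)
  ultimately show ?thesis using integral_split[OF assms(1-3)] assms(3) by (simp add: mult.commute)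
qed

lemma GG_inv_ge:
  assumes "f \<in> GG" "t \<in> {-1..1}" "a \<in> {-1..1}"
  shows "a \<le> finv f t \<longleftrightarrow> f a \<le> t"
proof -
  have m: "strict_mono_on {-1..1} f" using GG_D[OF assms(1)] by auto
  have "a \<le> finv f t \<longleftrightarrow> f a \<le> f (finv f t)"
    using strict_mono_on_leD[OF m] strict_mono_onD[OF m] GG_inv(1)[OF assms(1,2)] assms(3)
    by (smt (verit))
  then show ?thesis using GG_inv(2)[OF assms(1,2)] by simp
qed

lemma GG_mono: "f \<in> GG \<Longrightarrow> a \<in> {-1..1} \<Longrightarrow> b \<in> {-1..1} \<Longrightarrow> a \<le> b \<Longrightarrow> f a \<le> f b"
  using GG_D(2) strict_mono_on_leD by blast

lemma GG_range: "f \<in> GG \<Longrightarrow> a \<in> {-1..1} \<Longrightarrow> f a \<in> {-1..1}"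
  using GG_D(5) by blast

definition PP :: "(real \<Rightarrow> real) \<Rightarrow> real \<Rightarrow> real" where
  "PP f a = integral {-1..1} (\<lambda>t. max 0 (finv f t - a))"

definition II :: "(real \<Rightarrow> real) \<Rightarrow> real \<Rightarrow> real" where
  "II f a = integral {a..1} (\<lambda>s. 1 - f s)"

lemma PP_bounds:
  assumes f: "f \<in> GG" and ab: "-1 \<le> a" "a \<le> b" "b \<le> 1"
  shows "(b - a) * (1 - f b) \<le> PP f a - PP f b" "PP f a - PP f b \<le> (b - a) * (1 - f a)"
proof -
  define D where "D t = max 0 (finv f t - a) - max 0 (finv f t - b)" for t
  have c1: "continuous_on {-1..1} (\<lambda>t. max 0 (finv f t - c))" for c
    by (intro continuous_intros GG_inv_cont[OF f])
  have cD: "continuous_on {-1..1} D" unfolding D_def by (intro continuous_intros c1)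
  have eq: "PP f a - PP f b = integral {-1..1} D"
    unfolding PP_def D_def by (rule integral_diff[symmetric]) (auto intro: intcont c1)
  have fa: "f a \<in> {-1..1}" "f b \<in> {-1..1}" using GG_range[OF f] ab by auto
  have "integral {-1..1} D \<le> (b - a) * (1 - f a)"
  proof (rule int_upper[OF cD])
    show "\<forall>t\<in>{-1..f a}. D t \<le> 0"
    proof
      fix t assume t: "t \<in> {-1..f a}"
      then have "finv f t \<le> a" using GG_inv_le[OF f, of t a] fa ab by auto
      then show "D t \<le> 0" unfolding D_def using ab by auto
    qed
    show "\<forall>t\<in>{f a..1}. D t \<le> b - a" unfolding D_def using ab by auto
  qed (use fa in auto)
  then show "PP f a - PP f b \<le> (b - a) * (1 - f a)" using eq by simp
  have "integral {-1..1} D \<ge> (b - a) * (1 - f b)"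
  proof (rule int_lower[OF cD])
    show "\<forall>t\<in>{-1..f b}. D t \<ge> 0" unfolding D_def using ab by auto
    show "\<forall>t\<in>{f b..1}. D t \<ge> b - a"
    proof
      fix t assume t: "t \<in> {f b..1}"
      then have "b \<le> finv f t" using GG_inv_ge[OF f, of t b] fa ab by auto
      then show "D t \<ge> b - a" unfolding D_def using ab by auto
    qed
  qed (use fa in auto)
  then show "(b - a) * (1 - f b) \<le> PP f a - PP f b" using eq by simp
qed

lemma II_bounds:
  assumes f: "f \<in> GG" and ab: "-1 \<le> a" "a \<le> b" "b \<le> 1"
  shows "(b - a) * (1 - f b) \<le> II f a - II f b" "II f a - II f b \<le> (b - a) * (1 - f a)"
proof -
  have c: "continuous_on {-1..1} (\<lambda>s. 1 - f s)" by (intro continuous_intros GG_D(1)[OF f])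
  have ca: "continuous_on {a..1} (\<lambda>s. 1 - f s)" by (rule continuous_on_subset[OF c]) (use ab in auto)
  have eq: "II f a - II f b = integral {a..b} (\<lambda>s. 1 - f s)"
    unfolding II_def using integral_split[OF ca, of b] ab by simp
  have "integral {a..b} (\<lambda>s. 1 - f s) \<le> integral {a..b} (\<lambda>_. 1 - f a)"
    by (rule integral_le) (use ab intcont_sub[OF c] GG_mono[OF f] in auto)
  then show "II f a - II f b \<le> (b - a) * (1 - f a)" using eq ab by (simp add: mult.commute)
  have "integral {a..b} (\<lambda>s. 1 - f s) \<ge> integral {a..b} (\<lambda>_. 1 - f b)"
    by (rule integral_le) (use ab intcont_sub[OF c] GG_mono[OF f] in auto)
  then show "(b - a) * (1 - f b) \<le> II f a - II f b" using eq ab by (simp add: mult.commute)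
qed

lemma QQ_bound:
  assumes f: "f \<in> GG" and xy: "x \<in> {-1..1}" "y \<in> {-1..1}"
  shows "\<bar>(PP f y - II f y) - (PP f x - II f x)\<bar> \<le> \<bar>y - x\<bar> * \<bar>f y - f x\<bar>"
proof -
  have *: "\<bar>(PP f b - II f b) - (PP f a - II f a)\<bar> \<le> \<bar>b - a\<bar> * \<bar>f b - f a\<bar>"
    if "-1 \<le> a" "a \<le> b" "b \<le> 1" for a b
  proof -
    note p = PP_bounds[OF f that] and i = II_bounds[OF f that]
    have "f a \<le> f b" using GG_mono[OF f] that by auto
    then have "\<bar>(PP f b - II f b) - (PP f a - II f a)\<bar> \<le> (b - a) * (f b - f a)"
      using p i by (simp add: algebra_simps abs_le_iff)
    then show ?thesis using that \<open>f a \<le> f b\<close> by simp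
  qed
  show ?thesis
  proof (cases "x \<le> y")
    case True then show ?thesis using *[of x y] xy by auto
  next
    case False then show ?thesis using *[of y x] xy by (auto simp: abs_minus_commute)
  qed
qed

lemma KEY:
  assumes f: "f \<in> GG" and a: "a \<in> {-1..1}"
  shows "integral {-1..1} (\<lambda>t. max 0 (finv f t - a)) = integral {a..1} (\<lambda>s. 1 - f s)"
proof -
  define Q where "Q y = PP f y - II f y" for y
  have d: "(Q has_field_derivative 0) (at x within {-1..1})" if x: "x \<in> {-1..1}" for x
  proof -
    have lim: "((\<lambda>y. \<bar>f y - f x\<bar>) \<longlongrightarrow> 0) (at x within {-1..1})"
    proof -
      have "(f \<longlongrightarrow> f x) (at x within {-1..1})"
        using GG_D(1)[OF f] x by (simp add: continuous_on_def)
      then have "((\<lambda>y. f y - f x) \<longlongrightarrow> 0) (at x within {-1..1})"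
        using tendsto_diff[of f "f x" _ "\<lambda>_. f x" "f x"] by simp
      then show ?thesis by (rule tendsto_rabs_zero)
    qed
    have ev: "eventually (\<lambda>y. norm ((Q y - Q x) / (y - x)) \<le> \<bar>f y - f x\<bar>) (at x within {-1..1})"
      unfolding eventually_at_filter
    proof (rule always_eventually, intro allI impI)
      fix y assume "y \<noteq> x" "y \<in> {-1..1}"
      then have "\<bar>Q y - Q x\<bar> \<le> \<bar>y - x\<bar> * \<bar>f y - f x\<bar>" "\<bar>y - x\<bar> > 0"
        using QQ_bound[OF f x] unfolding Q_def by auto
      then show "norm ((Q y - Q x) / (y - x)) \<le> \<bar>f y - f x\<bar>"
        by (simp add: abs_divide divide_le_eq mult.commute)
    qed
    show ?thesis unfolding has_field_derivative_iff
      by (rule Lim_null_comparison[OF ev lim])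
  qed
  obtain c where c: "\<forall>x\<in>{-1..1}. Q x = c"
    using has_field_derivative_zero_constant[of "{-1..1}" Q] d by auto
  have "PP f 1 = 0"
    unfolding PP_def apply (subst Henstock_Kurzweil_Integration.integral_cong[where g="\<lambda>_. 0"]) using GG_inv(1)[OF f] by auto
  then have "Q 1 = 0" unfolding Q_def II_def by simp
  then have "Q a = 0" using c a by auto
  then show ?thesis unfolding Q_def PP_def II_def by simp
qed



definition ramp :: "real \<Rightarrow> real \<Rightarrow> real" where "ramp b = (\<lambda>s. max 0 (s - b))"
definition rampm :: "real \<Rightarrow> real \<Rightarrow> real" where "rampm b = (\<lambda>s. max 0 (b - s))"

lemma cont_ramp[continuous_intros]: "continuous_on S (ramp b)" "continuous_on S (rampm b)"
  unfolding ramp_def rampm_def by (intro continuous_intros)+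

lemma GG0_D: "f \<in> GG0 \<Longrightarrow> f \<in> GG" "f \<in> GG0 \<Longrightarrow> integral {-1..1} f = 0"
  by (auto simp: GG0_def)

lemma Lmap_comb:
  assumes f: "\<forall>j. f j \<in> GG" and g: "continuous_on {-1..1} g" and h: "continuous_on {-1..1} h"
  shows "Lmap f (\<lambda>s. x * g s + y * h s) = x *\<^sub>R Lmap f g + y *\<^sub>R Lmap f h"
proof -
  have "integral {-1..1} (\<lambda>t. x * g (finv (f j) t) + y * h (finv (f j) t)) =
        x * integral {-1..1} (\<lambda>t. g (finv (f j) t)) + y * integral {-1..1} (\<lambda>t. h (finv (f j) t))" for j
    by (subst integral_add) (auto intro!: intcont continuous_intros cont_comp_inv f[rule_format] g h)
  then show ?thesis unfolding Lmap_def by (simp add: vec_eq_iff)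
qed

lemma Lmap_sum:
  assumes f: "\<forall>j. f j \<in> GG" and K: "finite K" and g: "\<forall>k\<in>K. continuous_on {-1..1} (g k)"
  shows "Lmap f (\<lambda>s. \<Sum>k\<in>K. w k * g k s) = (\<Sum>k\<in>K. w k *\<^sub>R Lmap f (g k))"
proof -
  have "integral {-1..1} (\<lambda>t. \<Sum>k\<in>K. w k * g k (finv (f j) t)) =
        (\<Sum>k\<in>K. w k * integral {-1..1} (\<lambda>t. g k (finv (f j) t)))" for j
    by (subst integral_sum) (auto intro!: K intcont continuous_intros cont_comp_inv f[rule_format] g[rule_format])
  then show ?thesis unfolding Lmap_def by (simp add: vec_eq_iff)
qed

lemma int_inv_zero:
  assumes f: "f \<in> GG0"
  shows "integral {-1..1} (finv f) = 0"
proof -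
  have fG: "f \<in> GG" using f by (simp add: GG0_def)
  have "integral {-1..1} (\<lambda>t. max 0 (finv f t - (-1))) = integral {-1..1} (\<lambda>s. 1 - f s)"
    using KEY[OF fG, of "-1"] by simp
  also have "\<dots> = 2 - integral {-1..1} f"
    by (subst integral_diff) (auto intro!: intcont continuous_intros GG_D(1)[OF fG])
  also have "\<dots> = 2" using f by (simp add: GG0_def)
  finally have a: "integral {-1..1} (\<lambda>t. max 0 (finv f t - (-1))) = 2" .
  have "integral {-1..1} (\<lambda>t. max 0 (finv f t - (-1))) = integral {-1..1} (\<lambda>t. finv f t + 1)"
  proof (rule Henstock_Kurzweil_Integration.integral_cong)
    fix x :: real assume "x \<in> {-1..1}"
    then have "-1 \<le> finv f x" using GG_inv(1)[OF fG] by auto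
    then show "max 0 (finv f x - (-1)) = finv f x + 1" by simp
  qed
  also have "\<dots> = integral {-1..1} (finv f) + 2"
    by (subst integral_add) (auto intro!: intcont continuous_intros GG_inv_cont[OF fG])
  finally show ?thesis using a by simp
qed

lemma Lmap_ramp:
  assumes f: "\<forall>j. f j \<in> GG0" and b: "b \<in> {-1..1}"
  shows "Lmap f (ramp b) $ j = (1 - b) + integral {-1..b} (f j)"
proof -
  have fG: "f j \<in> GG" using f by (simp add: GG0_def)
  have c: "continuous_on {-1..1} (f j)" using GG_D(1)[OF fG] .
  have "Lmap f (ramp b) $ j = integral {b..1} (\<lambda>s. 1 - f j s)"
    unfolding Lmap_def ramp_def using KEY[OF fG b] by simp
  also have "\<dots> = (1 - b) - integral {b..1} (f j)"
    by (subst integral_diff) (use b in \<open>auto intro!: intcont_sub[OF c]\<close>)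
  also have "integral {b..1} (f j) = - integral {-1..b} (f j)"
    using integral_split[OF c, of b] b GG0_D(2)[OF f[rule_format, of j]] by simp
  finally show ?thesis by simp
qed

lemma Lmap_rampm:
  assumes f: "\<forall>j. f j \<in> GG0" and b: "b \<in> {-1..1}"
  shows "Lmap f (rampm b) $ j = (1 + b) + integral {-1..b} (f j)"
proof -
  have fG: "f j \<in> GG" using f by (simp add: GG0_def)
  have "Lmap f (rampm b) $ j = integral {-1..1} (\<lambda>t. max 0 (finv (f j) t - b) - (finv (f j) t - b))"
    unfolding Lmap_def rampm_def
    by (simp, rule Henstock_Kurzweil_Integration.integral_cong) (auto simp: max_def)
  also have "\<dots> = integral {-1..1} (\<lambda>t. max 0 (finv (f j) t - b)) - (integral {-1..1} (finv (f j)) - 2 * b)"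
    apply (subst integral_diff)
      apply (auto intro!: intcont continuous_intros GG_inv_cont[OF fG])
    apply (subst integral_diff)
      apply (auto intro!: intcont continuous_intros GG_inv_cont[OF fG])
    done
  also have "\<dots> = Lmap f (ramp b) $ j + 2 * b"
    using int_inv_zero[OF f[rule_format, of j]] unfolding Lmap_def ramp_def by simp
  finally show ?thesis using Lmap_ramp[OF f b, of j] by simp
qed

lemma Lmap_ident:
  assumes f: "\<forall>j. f j \<in> GG0"
  shows "Lmap f (\<lambda>s. s) = 0"
  unfolding Lmap_def using int_inv_zero f by (simp add: vec_eq_iff)



definition lipsch :: "(real \<Rightarrow> real) \<Rightarrow> bool" where
  "lipsch h \<longleftrightarrow> (\<exists>K. \<forall>s\<in>{-1..1}. \<forall>t\<in>{-1..1}. \<bar>h s - h t\<bar> \<le> K * \<bar>s - t\<bar>)"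

definition adm :: "(real \<Rightarrow> real) \<Rightarrow> bool" where
  "adm h \<longleftrightarrow> continuous_on {-1..1} h \<and> lipsch h \<and> h (-1) = 0 \<and> h 1 = 0 \<and> integral {-1..1} h = 0"

definition admo :: "(real \<Rightarrow> real) \<Rightarrow> bool" where
  "admo h \<longleftrightarrow> adm h \<and> (\<forall>t\<in>{-1..1}. h (-t) = - h t)"

lemma lipsch_comb:
  assumes "lipsch g" "lipsch h" shows "lipsch (\<lambda>s. x * g s + y * h s)"
proof -
  obtain K1 where K1: "\<forall>s\<in>{-1..1}. \<forall>t\<in>{-1..1}. \<bar>g s - g t\<bar> \<le> K1 * \<bar>s - t\<bar>"
    using assms(1) unfolding lipsch_def by blast
  obtain K2 where K2: "\<forall>s\<in>{-1..1}. \<forall>t\<in>{-1..1}. \<bar>h s - h t\<bar> \<le> K2 * \<bar>s - t\<bar>"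
    using assms(2) unfolding lipsch_def by blast
  have "\<bar>(x * g s + y * h s) - (x * g t + y * h t)\<bar> \<le> (\<bar>x\<bar> * K1 + \<bar>y\<bar> * K2) * \<bar>s - t\<bar>"
    if "s \<in> {-1..1}" "t \<in> {-1..1}" for s t
  proof -
    have "\<bar>(x * g s + y * h s) - (x * g t + y * h t)\<bar> \<le> \<bar>x\<bar> * \<bar>g s - g t\<bar> + \<bar>y\<bar> * \<bar>h s - h t\<bar>"
      by (metis (no_types, opaque_lifting) abs_mult abs_triangle_ineq add_diff_add right_diff_distrib)
    also have "\<dots> \<le> \<bar>x\<bar> * (K1 * \<bar>s - t\<bar>) + \<bar>y\<bar> * (K2 * \<bar>s - t\<bar>)"
      using K1 K2 that by (intro add_mono mult_left_mono) auto
    finally show ?thesis by (simp add: algebra_simps)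
  qed
  then show ?thesis unfolding lipsch_def by blast
qed

lemma integral_odd:
  fixes h :: "real \<Rightarrow> real"
  assumes c: "continuous_on {-1..1} h" and o: "\<forall>t\<in>{-1..1}. h (-t) = - h t"
  shows "integral {-1..1} h = 0"
proof -
  have "integral {-1..1} h = integral {-1..1} (\<lambda>x. h (-x))"
    using Henstock_Kurzweil_Integration.integral_reflect_real[of 1 "-1" h] by simp
  also have "\<dots> = integral {-1..1} (\<lambda>x. - h x)"
    by (rule Henstock_Kurzweil_Integration.integral_cong) (use o in auto)
  finally show ?thesis by simp
qed

lemma adm_comb:
  assumes "adm g" "adm h" shows "adm (\<lambda>s. x * g s + y * h s)"
proof -
  have "integral {-1..1} (\<lambda>s. x * g s + y * h s) = x * integral {-1..1} g + y * integral {-1..1} h"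
    using assms unfolding adm_def by (subst integral_add) (auto intro!: intcont continuous_intros)
  then show ?thesis using assms lipsch_comb unfolding adm_def by (auto intro!: continuous_intros)
qed

lemma admo_comb:
  assumes "admo g" "admo h" shows "admo (\<lambda>s. x * g s + y * h s)"
  using assms adm_comb unfolding admo_def by auto

lemma adm_zero: "adm (\<lambda>s. 0)" "admo (\<lambda>s. 0)"
  unfolding admo_def adm_def lipsch_def by (auto intro: exI[of _ 0])

lemma adm_sum:
  assumes "finite K" "\<forall>k\<in>K. adm (g k)" shows "adm (\<lambda>s. \<Sum>k\<in>K. w k * g k s)"
  using assms
proof (induction K rule: finite_induct)
  case empty then show ?case using adm_zero by simp
next
  case (insert k K)
  then have "adm (\<lambda>s. w k * g k s + 1 * (\<Sum>k\<in>K. w k * g k s))" by (intro adm_comb) auto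
  then show ?case using insert by simp
qed

lemma admo_sum:
  assumes "finite K" "\<forall>k\<in>K. admo (g k)" shows "admo (\<lambda>s. \<Sum>k\<in>K. w k * g k s)"
  using assms
proof (induction K rule: finite_induct)
  case empty then show ?case using adm_zero by simp
next
  case (insert k K)
  then have "admo (\<lambda>s. w k * g k s + 1 * (\<Sum>k\<in>K. w k * g k s))" by (intro admo_comb) auto
  then show ?case using insert by simp
qed

lemma sum_axis_real: "(\<Sum>k\<in>UNIV. (t $ k) *\<^sub>R axis k (1::real)) = (t :: real ^ 'n)"
  by (simp add: vec_eq_iff axis_def if_distrib cong: if_cong)

lemma integral_ident: "integral {-1..1} (\<lambda>s::real. s) = 0"
  by (rule integral_odd) auto

lemma pert_GG0:
  assumes h: "adm h" and small: "\<forall>s\<in>{-1..1}. \<forall>t\<in>{-1..1}. s < t \<longrightarrow> h s - h t < t - s"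
  shows "(\<lambda>s. s + h s) \<in> GG0"
proof -
  have c: "continuous_on {-1..1} (\<lambda>s. s + h s)" using h unfolding adm_def by (auto intro!: continuous_intros)
  have m: "strict_mono_on {-1..1} (\<lambda>s. s + h s)"
    by (rule strict_mono_onI) (use small in force)
  have e: "(\<lambda>s. s + h s) (-1) = -1" "(\<lambda>s. s + h s) 1 = 1" using h unfolding adm_def by auto
  have im: "(\<lambda>s. s + h s) ` {-1..1} \<subseteq> {-1..1}"
  proof
    fix y assume "y \<in> (\<lambda>s. s + h s) ` {-1..1}"
    then obtain s where s: "s \<in> {-1..1}" "y = s + h s" by auto
    have "-1 \<le> s + h s"
      using strict_mono_on_leD[OF m, of "-1" s] s e by auto
    moreover have "s + h s \<le> 1"
      using strict_mono_on_leD[OF m, of s 1] s e by auto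
    ultimately show "y \<in> {-1..1}" using s by auto
  qed
  have "integral {-1..1} (\<lambda>s. s + h s) = 0"
    using h integral_ident unfolding adm_def by (subst integral_add) (auto intro!: intcont continuous_intros)
  then show ?thesis unfolding GG0_def GG_def using c m e im by auto
qed

lemma INT:
  fixes f :: "'n::finite \<Rightarrow> real \<Rightarrow> real"
  assumes f: "\<forall>j. f j \<in> GG0" and hk: "\<forall>k. adm (hk k)" and L: "\<forall>k. Lmap f (hk k) = axis k 1"
  shows "\<exists>\<delta>>0. \<forall>t::real^'n. norm t < \<delta> \<longrightarrow>
     (\<lambda>s. s + (\<Sum>k\<in>UNIV. t$k * hk k s)) \<in> GG0 \<and> Lmap f (\<lambda>s. s + (\<Sum>k\<in>UNIV. t$k * hk k s)) = t"
proof -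
  have "\<forall>k. \<exists>K. \<forall>s\<in>{-1..1}. \<forall>t\<in>{-1..1}. \<bar>hk k s - hk k t\<bar> \<le> K * \<bar>s - t\<bar>"
    using hk unfolding adm_def lipsch_def by blast
  then obtain K0 where K0: "\<forall>k. \<forall>s\<in>{-1..1}. \<forall>t\<in>{-1..1}. \<bar>hk k s - hk k t\<bar> \<le> K0 k * \<bar>s - t\<bar>"
    by metis
  define K where "K k = max 0 (K0 k)" for k
  have K: "\<forall>k. \<forall>s\<in>{-1..1}. \<forall>t\<in>{-1..1}. \<bar>hk k s - hk k t\<bar> \<le> K k * \<bar>s - t\<bar>" "\<forall>k. K k \<ge> 0"
  proof -
    have "K0 k * \<bar>s - t\<bar> \<le> K k * \<bar>s - t\<bar>" for k and s t :: real
      unfolding K_def by (rule mult_right_mono) auto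
    then show "\<forall>k. \<forall>s\<in>{-1..1}. \<forall>t\<in>{-1..1}. \<bar>hk k s - hk k t\<bar> \<le> K k * \<bar>s - t\<bar>"
      using K0 by (meson order_trans)
    show "\<forall>k. K k \<ge> 0" unfolding K_def by simp
  qed
  define Ks where "Ks = (\<Sum>k\<in>UNIV. K k)"
  have Ks0: "Ks \<ge> 0" unfolding Ks_def using K(2) by (simp add: sum_nonneg)
  define \<delta> where "\<delta> = 1 / (Ks + 1)"
  have d0: "\<delta> > 0" using Ks0 unfolding \<delta>_def by simp
  have dK: "\<delta> * Ks < 1" using Ks0 unfolding \<delta>_def by (simp add: field_simps)
  show ?thesis
  proof (intro exI[of _ \<delta>] conjI allI impI d0)
    fix t :: "real^'n" assume tn: "norm t < \<delta>"
    have tk: "\<bar>t$k\<bar> \<le> \<delta>" for k using component_le_norm_cart[of t k] tn by simp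
    define h where "h s = (\<Sum>k\<in>UNIV. t$k * hk k s)" for s
    have ah: "adm h" unfolding h_def by (rule adm_sum) (use hk in auto)
    have small: "\<forall>s\<in>{-1..1}. \<forall>u\<in>{-1..1}. s < u \<longrightarrow> h s - h u < u - s"
    proof (intro ballI impI)
      fix s u :: real assume su: "s \<in> {-1..1}" "u \<in> {-1..1}" "s < u"
      have "\<bar>h s - h u\<bar> = \<bar>\<Sum>k\<in>UNIV. t$k * (hk k s - hk k u)\<bar>"
        unfolding h_def by (simp add: sum_subtractf[symmetric] algebra_simps)
      also have "\<dots> \<le> (\<Sum>k\<in>UNIV. \<bar>t$k * (hk k s - hk k u)\<bar>)" by (rule sum_abs)
      also have "\<dots> \<le> (\<Sum>k\<in>UNIV. \<delta> * (K k * (u - s)))"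
      proof (rule sum_mono)
        fix k :: 'n
        have "\<bar>hk k s - hk k u\<bar> \<le> K k * \<bar>s - u\<bar>" using K(1) su(1,2) by blast
        then have "\<bar>hk k s - hk k u\<bar> \<le> K k * (u - s)" using su(3) by simp
        then show "\<bar>t$k * (hk k s - hk k u)\<bar> \<le> \<delta> * (K k * (u - s))"
          unfolding abs_mult using tk[of k] by (intro mult_mono) auto
      qed
      also have "\<dots> = (\<delta> * Ks) * (u - s)" unfolding Ks_def by (simp add: sum_distrib_left sum_distrib_right algebra_simps)
      also have "\<dots> < u - s" using dK su by simp
      finally show "h s - h u < u - s" by simp
    qed
    show "(\<lambda>s. s + (\<Sum>k\<in>UNIV. t$k * hk k s)) \<in> GG0"
      using pert_GG0[OF ah small] unfolding h_def .
    have fG: "\<forall>j. f j \<in> GG" using f by (simp add: GG0_def)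
    have "Lmap f (\<lambda>s. 1 * s + 1 * h s) = 1 *\<^sub>R Lmap f (\<lambda>s. s) + 1 *\<^sub>R Lmap f h"
      by (rule Lmap_comb[OF fG]) (use ah in \<open>auto simp: adm_def intro: continuous_intros\<close>)
    also have "Lmap f h = (\<Sum>k\<in>UNIV. t$k *\<^sub>R Lmap f (hk k))"
      unfolding h_def by (rule Lmap_sum[OF fG]) (use hk in \<open>auto simp: adm_def\<close>)
    finally show "Lmap f (\<lambda>s. s + (\<Sum>k\<in>UNIV. t$k * hk k s)) = t"
      using Lmap_ident[OF f] L sum_axis_real unfolding h_def by simp
  qed
qed



lemma SURJ:
  fixes f :: "'n::finite \<Rightarrow> real \<Rightarrow> real" and A :: "(real \<Rightarrow> real) set"
  assumes f: "\<forall>j. f j \<in> GG"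
    and cl: "\<forall>g\<in>A. \<forall>h\<in>A. \<forall>x y. (\<lambda>s. x * g s + y * h s) \<in> A"
    and z: "(\<lambda>s. 0) \<in> A" and cont: "\<forall>h\<in>A. continuous_on {-1..1} h"
    and nd: "\<forall>c::real^'n. c \<noteq> 0 \<longrightarrow> (\<exists>h\<in>A. c \<bullet> Lmap f h \<noteq> 0)"
  shows "\<exists>h\<in>A. Lmap f h = v"
proof -
  let ?S = "Lmap f ` A"
  have L0: "Lmap f (\<lambda>s. 0) = 0" unfolding Lmap_def by (simp add: vec_eq_iff)
  have sub: "subspace ?S"
    unfolding subspace_def
  proof (intro conjI ballI allI)
    show "0 \<in> ?S" using z L0 by force
  next
    fix x y assume "x \<in> ?S" "y \<in> ?S"
    then obtain g h where gh: "g \<in> A" "h \<in> A" "x = Lmap f g" "y = Lmap f h" by auto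
    have cg: "continuous_on {-1..1} g" "continuous_on {-1..1} h" using gh(1,2) cont by auto
    have "Lmap f (\<lambda>s. 1 * g s + 1 * h s) = 1 *\<^sub>R Lmap f g + 1 *\<^sub>R Lmap f h"
      by (rule Lmap_comb[OF f cg])
    then have eq: "Lmap f (\<lambda>s. 1 * g s + 1 * h s) = x + y" using gh(3,4) by simp
    have mem: "(\<lambda>s. 1 * g s + 1 * h s) \<in> A" using cl gh(1,2) by blast
    show "x + y \<in> ?S" using image_eqI[where f="Lmap f", OF eq[symmetric] mem] .
  next
    fix c x assume "x \<in> ?S"
    then obtain g where gh: "g \<in> A" "x = Lmap f g" by auto
    have cg: "continuous_on {-1..1} g" using gh(1) cont by auto
    have "Lmap f (\<lambda>s. c * g s + 0 * g s) = c *\<^sub>R Lmap f g + 0 *\<^sub>R Lmap f g"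
      by (rule Lmap_comb[OF f cg cg])
    then have eq: "Lmap f (\<lambda>s. c * g s + 0 * g s) = c *\<^sub>R x" using gh(2) by simp
    have mem: "(\<lambda>s. c * g s + 0 * g s) \<in> A" using cl gh(1) by blast
    show "c *\<^sub>R x \<in> ?S" using image_eqI[where f="Lmap f", OF eq[symmetric] mem] .
  qed
  have "span ?S = UNIV"
  proof (rule ccontr)
    assume "span ?S \<noteq> UNIV"
    then obtain c :: "real^'n" where c: "c \<noteq> 0" "span ?S \<subseteq> {x. c \<bullet> x = 0}"
      using span_not_univ_subset_hyperplane by blast
    then obtain h where "h \<in> A" "c \<bullet> Lmap f h \<noteq> 0" using nd by blast
    then show False using c span_base[of "Lmap f h" ?S] by auto
  qed
  moreover have "span ?S = ?S" using sub span_eq_iff by blast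
  ultimately have "?S = UNIV" by simp
  then show ?thesis by (metis UNIV_I imageE)
qed

lemma lipsch_ramp: "lipsch (ramp b)" "lipsch (rampm b)"
  unfolding lipsch_def ramp_def rampm_def by (auto intro!: exI[of _ 1] simp: max_def abs_if)

lemma adm_C: "continuous_on {-1..1} h \<Longrightarrow> lipsch h \<Longrightarrow> h (-1) = 0 \<Longrightarrow> h 1 = 0 \<Longrightarrow> integral {-1..1} h = 0 \<Longrightarrow> adm h"
  unfolding adm_def by auto

lemma integral_ramp:
  assumes b: "b \<in> {-1..1}"
  shows "integral {-1..1} (ramp b) = (1 - b)^2 / 2"
proof -
  have c: "continuous_on {-1..1} (ramp b)" by (rule cont_ramp)
  have "integral {-1..b} (ramp b) = integral {-1..b} (\<lambda>_. 0)"
    by (rule Henstock_Kurzweil_Integration.integral_cong) (auto simp: ramp_def)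
  moreover have "integral {b..1} (ramp b) = integral {b..1} (\<lambda>s. s - b)"
    by (rule Henstock_Kurzweil_Integration.integral_cong) (auto simp: ramp_def)
  moreover have "((\<lambda>s. s - b) has_integral ((\<lambda>x. (x - b)^2/2) 1 - (\<lambda>x. (x - b)^2/2) b)) {b..1}"
  proof (rule fundamental_theorem_of_calculus)
    show "b \<le> 1" using b by simp
    fix x assume "x \<in> {b..1}"
    have "((\<lambda>x. (x - b)^2/2) has_real_derivative (x - b)) (at x within {b..1})"
      by (auto intro!: derivative_eq_intros)
    then show "((\<lambda>x. (x - b)^2/2) has_vector_derivative (x - b)) (at x within {b..1})"
      by (simp add: has_real_derivative_iff_has_vector_derivative)
  qed
  ultimately show ?thesis using integral_split[OF c, of b] b
    by (simp add: integral_unique)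
qed

lemma lipsch_comb3:
  assumes "lipsch g" "lipsch h" "lipsch k" shows "lipsch (\<lambda>s. x * g s + y * h s + z * k s)"
proof -
  have "lipsch (\<lambda>s. 1 * (x * g s + y * h s) + z * k s)"
    by (rule lipsch_comb[OF lipsch_comb[OF assms(1,2)] assms(3)])
  then show ?thesis by simp
qed

lemma sum_option: "(\<Sum>k\<in>(UNIV :: 'n::finite option set). G k) = G None + (\<Sum>j\<in>UNIV. G (Some j))"
  by (simp add: UNIV_option_conv sum.reindex)

lemma NONDEG1:
  fixes f :: "'n::finite \<Rightarrow> real \<Rightarrow> real"
  assumes f: "\<forall>j. f j \<in> GG0" and lin: "LIN f"
  shows "\<forall>c::real^'n. c \<noteq> 0 \<longrightarrow> (\<exists>h\<in>Collect adm. c \<bullet> Lmap f h \<noteq> 0)"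
proof (intro allI impI, rule ccontr)
  fix c :: "real^'n" assume c0: "c \<noteq> 0" and "\<not> (\<exists>h\<in>Collect adm. c \<bullet> Lmap f h \<noteq> 0)"
  then have van: "\<And>h. adm h \<Longrightarrow> c \<bullet> Lmap f h = 0" by auto
  have fG: "\<forall>j. f j \<in> GG" using f by (simp add: GG0_def)
  have fc: "continuous_on {-1..1} (f j)" for j using GG_D(1) fG by blast
  define g where "g s = (\<Sum>j\<in>UNIV. c$j * f j s)" for s
  have gc: "continuous_on {-1..1} g" unfolding g_def by (intro continuous_intros fc)
  define F where "F a = integral {-1..a} g" for a
  have Fsum: "(\<Sum>j\<in>UNIV. c$j * integral {-1..a} (f j)) = F a" if "a \<in> {-1..1}" for a
    unfolding F_def g_def using that
    by (subst integral_sum) (auto intro!: intcont_sub[of "-1" 1] continuous_intros fc)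
  have key: "F a = (1 - a^2) * F 0" if a: "a \<in> {-1..1}" for a
  proof -
    define h where "h s = 1 * ramp a s + (a * (1 - a) / 2) * ramp (-1) s + (-(1 - a^2)) * ramp 0 s" for s
    have "adm h"
    proof (rule adm_C)
      show "continuous_on {-1..1} h" unfolding h_def by (intro continuous_intros)
      show "lipsch h" unfolding h_def by (intro lipsch_comb3 lipsch_ramp)
      show "h (-1) = 0" using a unfolding h_def ramp_def by auto
      show "h 1 = 0" using a unfolding h_def ramp_def by (simp add: max_def power2_eq_square field_simps)
      have "integral {-1..1} h = 1 * integral {-1..1} (ramp a) + (a * (1 - a) / 2) * integral {-1..1} (ramp (-1))
             + (-(1 - a^2)) * integral {-1..1} (ramp 0)"
        unfolding h_def
        by (subst integral_add, auto intro!: intcont continuous_intros)+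
      also have "\<dots> = 0" using a by (simp add: integral_ramp power2_eq_square field_simps)
      finally show "integral {-1..1} h = 0" .
    qed
    then have "c \<bullet> Lmap f h = 0" by (rule van)
    moreover have "Lmap f h = 1 *\<^sub>R Lmap f (ramp a) + (a * (1 - a) / 2) *\<^sub>R Lmap f (ramp (-1)) + (-(1 - a^2)) *\<^sub>R Lmap f (ramp 0)"
    proof -
      have "Lmap f h = Lmap f (\<lambda>s. 1 * (1 * ramp a s + (a * (1 - a) / 2) * ramp (-1) s) + (-(1 - a^2)) * ramp 0 s)"
        unfolding h_def by simp
      also have "\<dots> = 1 *\<^sub>R Lmap f (\<lambda>s. 1 * ramp a s + (a * (1 - a) / 2) * ramp (-1) s) + (-(1 - a^2)) *\<^sub>R Lmap f (ramp 0)"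
        by (rule Lmap_comb[OF fG]) (auto intro!: continuous_intros)
      also have "Lmap f (\<lambda>s. 1 * ramp a s + (a * (1 - a) / 2) * ramp (-1) s) = 1 *\<^sub>R Lmap f (ramp a) + (a * (1 - a) / 2) *\<^sub>R Lmap f (ramp (-1))"
        by (rule Lmap_comb[OF fG]) (auto intro!: continuous_intros)
      finally show ?thesis by simp
    qed
    ultimately have h0: "c \<bullet> Lmap f h = 0" and Lh: "Lmap f h = 1 *\<^sub>R Lmap f (ramp a) + (a * (1 - a) / 2) *\<^sub>R Lmap f (ramp (-1)) + (-(1 - a^2)) *\<^sub>R Lmap f (ramp 0)" by auto
    have Lj: "Lmap f h $ j = ((1 - a) + integral {-1..a} (f j)) + (a * (1 - a) / 2) * 2 - (1 - a^2) * (1 + integral {-1..0} (f j))" for j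
    proof -
      have r1: "Lmap f (ramp (-1)) $ j = 2" using Lmap_ramp[OF f, of "-1" j] by simp
      have r0: "Lmap f (ramp 0) $ j = 1 + integral {-1..0} (f j)" using Lmap_ramp[OF f, of 0 j] by simp
      have ra: "Lmap f (ramp a) $ j = (1 - a) + integral {-1..a} (f j)" using Lmap_ramp[OF f a, of j] by simp
      show ?thesis unfolding Lh using r1 r0 ra by (simp add: algebra_simps)
    qed
    have pt: "c$j * Lmap f h $ j = c$j * integral {-1..a} (f j) - (1 - a^2) * (c$j * integral {-1..0} (f j))" for j
    proof -
      have e0: "(a * (1 - a) / 2) * 2 = a * (1 - a)" by simp
      have e1: "(1 - a) + a * (1 - a) - (1 - a^2) = 0" by (simp add: power2_eq_square algebra_simps)
      have e: "(1 - a) + (a * (1 - a) / 2) * 2 - (1 - a^2) = 0" using e0 e1 by simp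
      have aux: "cc * (p + X + q - B * (1 + Y)) = cc * X - B * (cc * Y) + cc * (p + q - B)" for cc p X q B Y :: real
        by (simp add: algebra_simps)
      show ?thesis unfolding Lj aux using e by simp
    qed
    have "c \<bullet> Lmap f h = (\<Sum>j\<in>UNIV. c$j * Lmap f h $ j)" by (simp add: inner_vec_def)
    also have "\<dots> = (\<Sum>j\<in>UNIV. c$j * integral {-1..a} (f j)) - (1 - a^2) * (\<Sum>j\<in>UNIV. c$j * integral {-1..0} (f j))"
      unfolding pt by (simp add: sum_subtractf sum_distrib_left)
    finally have "(\<Sum>j\<in>UNIV. c$j * integral {-1..a} (f j)) - (1 - a^2) * (\<Sum>j\<in>UNIV. c$j * integral {-1..0} (f j)) = 0"
      using h0 by simp
    then show ?thesis using Fsum[OF a] Fsum[of 0] by simp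
  qed
  have gval: "g a = -2 * a * F 0" if a: "a \<in> {-1..1}" for a
  proof -
    have d1: "(F has_vector_derivative g a) (at a within {-1..1})"
      unfolding F_def by (rule integral_has_vector_derivative[OF gc a])
    have "((\<lambda>x. (1 - x^2) * F 0) has_real_derivative (-2 * a * F 0)) (at a within {-1..1})"
      by (auto intro!: derivative_eq_intros)
    then have dp: "((\<lambda>x. (1 - x^2) * F 0) has_vector_derivative (-2 * a * F 0)) (at a within {-1..1})"
      by (simp add: has_real_derivative_iff_has_vector_derivative)
    have d2: "(F has_vector_derivative (-2 * a * F 0)) (at a within {-1..1})"
      by (rule has_vector_derivative_transform[OF a _ dp]) (rule key)
    show ?thesis
      by (rule vector_derivative_unique_within_closed_interval[of "-1" 1 a F]) (use a d1 d2 in auto)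
  qed
  define cc where "cc k = (case k of None \<Rightarrow> 2 * F 0 | Some j \<Rightarrow> c$j)" for k
  have "\<forall>t\<in>{-1..1}. (\<Sum>k\<in>UNIV. cc k * (case k of None \<Rightarrow> ident | Some j \<Rightarrow> f j) t) = 0"
  proof
    fix t :: real assume t: "t \<in> {-1..1}"
    show "(\<Sum>k\<in>UNIV. cc k * (case k of None \<Rightarrow> ident | Some j \<Rightarrow> f j) t) = 0"
    proof -
      have "(\<Sum>k\<in>UNIV. cc k * (case k of None \<Rightarrow> ident | Some j \<Rightarrow> f j) t) = 2 * F 0 * t + g t"
        unfolding sum_option cc_def g_def by (simp add: ident_def)
      then show ?thesis using gval[OF t] by simp
    qed
  qed
  then have ck: "\<forall>k. cc k = 0" using lin unfolding LIN_def lin_indep_fam_def by blast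
  have "c$j = 0" for j using ck[rule_format, of "Some j"] by (simp add: cc_def)
  then have "c = 0" by (simp add: vec_eq_iff)
  then show False using c0 by simp
qed



definition oramp :: "real \<Rightarrow> real \<Rightarrow> real" where "oramp a = (\<lambda>s. ramp a s - rampm (-a) s)"

lemma cont_oramp[continuous_intros]: "continuous_on S (oramp a)"
  unfolding oramp_def by (intro continuous_intros)

lemma lipsch_oramp: "lipsch (oramp a)"
proof -
  have "lipsch (\<lambda>s. 1 * ramp a s + (-1) * rampm (-a) s)" by (intro lipsch_comb lipsch_ramp)
  then show ?thesis unfolding oramp_def by simp
qed

lemma oramp_odd: "oramp a (-t) = - oramp a t"
  unfolding oramp_def ramp_def rampm_def by simp

lemma Lmap_oramp:
  assumes f: "\<forall>j. f j \<in> GG0" and a: "a \<in> {-1..1}"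
  shows "Lmap f (oramp a) $ j = integral {-1..a} (f j) - integral {-1..-a} (f j)"
proof -
  have fG: "\<forall>j. f j \<in> GG" using f by (simp add: GG0_def)
  have "Lmap f (\<lambda>s. 1 * ramp a s + (-1) * rampm (-a) s) = 1 *\<^sub>R Lmap f (ramp a) + (-1) *\<^sub>R Lmap f (rampm (-a))"
    by (rule Lmap_comb[OF fG]) (auto intro: continuous_intros)
  then have "Lmap f (oramp a) = Lmap f (ramp a) - Lmap f (rampm (-a))" unfolding oramp_def by simp
  then show ?thesis using Lmap_ramp[OF f a, of j] Lmap_rampm[OF f, of "-a" j] a by simp
qed

lemma NONDEG2:
  fixes f :: "'n::finite \<Rightarrow> real \<Rightarrow> real"
  assumes f: "\<forall>j. f j \<in> GG0" and lin: "LINp f"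
  shows "\<forall>c::real^'n. c \<noteq> 0 \<longrightarrow> (\<exists>h\<in>Collect admo. c \<bullet> Lmap f h \<noteq> 0)"
proof (intro allI impI, rule ccontr)
  fix c :: "real^'n" assume c0: "c \<noteq> 0" and "\<not> (\<exists>h\<in>Collect admo. c \<bullet> Lmap f h \<noteq> 0)"
  then have van: "\<And>h. admo h \<Longrightarrow> c \<bullet> Lmap f h = 0" by auto
  have fG: "\<forall>j. f j \<in> GG" using f by (simp add: GG0_def)
  have fc: "continuous_on {-1..1} (f j)" for j using GG_D(1) fG by blast
  have F1: "integral {-1..1} (f j) = 0" for j using f by (simp add: GG0_def)
  define g where "g s = (\<Sum>j\<in>UNIV. c$j * f j s)" for s
  have gc: "continuous_on {-1..1} g" unfolding g_def by (intro continuous_intros fc)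
  define F where "F a = integral {-1..a} g" for a
  have Fsum: "(\<Sum>j\<in>UNIV. c$j * integral {-1..a} (f j)) = F a" if "a \<in> {-1..1}" for a
    unfolding F_def g_def using that
    by (subst integral_sum) (auto intro!: intcont_sub[of "-1" 1] continuous_intros fc)
  have key: "F a = F (-a)" if a: "a \<in> {-1..1}" for a
  proof -
    define h where "h s = 1 * oramp a s + (-(1 - a) / 2) * oramp (-1) s" for s
    have "admo h" unfolding admo_def
    proof (intro conjI ballI)
      fix t :: real show "h (-t) = - h t" unfolding h_def oramp_odd by simp
    next
      have hc: "continuous_on {-1..1} h" unfolding h_def by (intro continuous_intros)
      have ho: "\<forall>t\<in>{-1..1}. h (-t) = - h t" unfolding h_def oramp_odd by simp
      show "adm h"
      proof (rule adm_C[OF hc])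
        show "lipsch h" unfolding h_def by (intro lipsch_comb lipsch_oramp)
        show "h (-1) = 0" using a unfolding h_def oramp_def ramp_def rampm_def by (simp add: max_def field_simps)
        show "h 1 = 0" using a unfolding h_def oramp_def ramp_def rampm_def by (simp add: max_def field_simps)
        show "integral {-1..1} h = 0" by (rule integral_odd[OF hc ho])
      qed
    qed
    then have h0: "c \<bullet> Lmap f h = 0" by (rule van)
    have Lh: "Lmap f h = 1 *\<^sub>R Lmap f (oramp a) + (-(1 - a) / 2) *\<^sub>R Lmap f (oramp (-1))"
      unfolding h_def by (rule Lmap_comb[OF fG]) (auto intro: continuous_intros)
    have Lj: "Lmap f h $ j = integral {-1..a} (f j) - integral {-1..-a} (f j)" for j
    proof -
      have "Lmap f (oramp (-1)) $ j = 0" using Lmap_oramp[OF f, of "-1" j] F1 by simp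
      then show ?thesis unfolding Lh using Lmap_oramp[OF f a, of j] by simp
    qed
    have "c \<bullet> Lmap f h = (\<Sum>j\<in>UNIV. c$j * Lmap f h $ j)" by (simp add: inner_vec_def)
    also have "\<dots> = (\<Sum>j\<in>UNIV. c$j * integral {-1..a} (f j)) - (\<Sum>j\<in>UNIV. c$j * integral {-1..-a} (f j))"
      unfolding Lj by (simp add: sum_subtractf right_diff_distrib)
    finally show ?thesis using h0 Fsum[OF a] Fsum[of "-a"] a by simp
  qed
  have gval: "g a = - g (-a)" if a: "a \<in> {-1..1}" for a
  proof -
    have d1: "(F has_vector_derivative g a) (at a within {-1..1})"
      unfolding F_def by (rule integral_has_vector_derivative[OF gc a])
    have ma: "-a \<in> {-1..1}" using a by auto
    have dF: "(F has_vector_derivative g (-a)) (at (-a) within uminus ` {-1..1})"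
    proof -
      have "uminus ` {-1..1::real} = {-1..1}" by (auto simp: image_iff intro!: bexI[of _ "- _"])
      then show ?thesis unfolding F_def using integral_has_vector_derivative[OF gc ma] by simp
    qed
    have du: "((uminus :: real \<Rightarrow> real) has_vector_derivative (-1)) (at a within {-1..1})"
      by (auto intro!: derivative_eq_intros simp: has_real_derivative_iff_has_vector_derivative[symmetric])
    have dc: "((F \<circ> uminus) has_vector_derivative ((-1) *\<^sub>R g (-a))) (at a within {-1..1})"
      by (rule vector_diff_chain_within[OF du dF])
    have d2: "(F has_vector_derivative (- g (-a))) (at a within {-1..1})"
    proof (rule has_vector_derivative_transform[OF a _ ])
      show "((F \<circ> uminus) has_vector_derivative (- g (-a))) (at a within {-1..1})" using dc by simp
      fix x :: real assume x: "x \<in> {-1..1}" show "F x = (F \<circ> uminus) x" using key[OF x] by simp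
    qed
    show ?thesis
      by (rule vector_derivative_unique_within_closed_interval[of "-1" 1 a F]) (use a d1 d2 in auto)
  qed
  have "\<forall>t\<in>{-1..1}. (\<Sum>j\<in>UNIV. c$j * even_part (f j) t) = 0"
  proof
    fix t :: real assume t: "t \<in> {-1..1}"
    have "(\<Sum>j\<in>UNIV. c$j * even_part (f j) t) = (g t + g (-t)) / 2"
    proof -
      have "(\<Sum>j\<in>UNIV. c$j * even_part (f j) t) = (\<Sum>j\<in>UNIV. (c$j * f j t + c$j * f j (-t)) / 2)"
        unfolding even_part_def by (rule sum.cong) (simp_all add: field_simps)
      also have "\<dots> = (\<Sum>j\<in>UNIV. c$j * f j t + c$j * f j (-t)) / 2" by (simp add: sum_divide_distrib)
      also have "\<dots> = (g t + g (-t)) / 2" by (simp add: g_def sum.distrib)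
      finally show ?thesis .
    qed
    then show "(\<Sum>j\<in>UNIV. c$j * even_part (f j) t) = 0" using gval[OF t] by simp
  qed
  then have ck: "\<forall>j. c$j = 0" using lin unfolding LINp_def lin_indep_fam_def by blast
  then have "c = 0" by (simp add: vec_eq_iff)
  then show False using c0 by simp
qed



lemma ramp_indep:
  fixes A :: "real set"
  assumes "finite A"
  shows "A \<subseteq> {0<..<1} \<Longrightarrow> (\<forall>s\<in>{0..1}. (\<Sum>a\<in>A. c a * ramp a s) = 0) \<Longrightarrow> \<forall>a\<in>A. c a = 0"
  using assms
proof (induction A arbitrary: c rule: finite_linorder_min_induct)
  case empty then show ?case by simp
next
  case (insert b A)
  have bA: "b \<notin> A" using insert.hyps(2) by auto
  have b01: "0 < b" "b < 1" using insert.prems(1) by auto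
  define m2 where "m2 = Min (insert 1 A)"
  have m2: "b < m2" "m2 \<le> 1" "\<forall>a\<in>A. m2 \<le> a"
    unfolding m2_def using insert.hyps(1,2) b01 by auto
  define s0 where "s0 = (b + m2) / 2"
  have s0: "s0 \<in> {0..1}" "b < s0" "\<forall>a\<in>A. s0 < a" using m2 b01 unfolding s0_def by auto
  have "(\<Sum>a\<in>insert b A. c a * ramp a s0) = c b * (s0 - b)"
  proof -
    have "(\<Sum>a\<in>A. c a * ramp a s0) = 0"
      by (rule sum.neutral) (use s0(3) in \<open>auto simp: ramp_def\<close>)
    then show ?thesis using bA insert.hyps(1) s0(2) by (simp add: ramp_def)
  qed
  then have cb: "c b = 0" using insert.prems(2) s0 by auto
  have "\<forall>s\<in>{0..1}. (\<Sum>a\<in>A. c a * ramp a s) = 0"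
    using insert.prems(2) bA insert.hyps(1) cb by simp
  then have "\<forall>a\<in>A. c a = 0" using insert.IH insert.prems(1) by auto
  then show ?case using cb by auto
qed

definition sc :: "real \<Rightarrow> (real \<Rightarrow> real) \<Rightarrow> real \<Rightarrow> real" where
  "sc c u = (\<lambda>x. c * u x)"

lemma vs_sc: "vector_space sc"
  by unfold_locales (auto simp: sc_def fun_eq_iff algebra_simps)

interpretation fv: vector_space sc by (rule vs_sc)

lemma sum_fun_app: "(sum F S) (x::real) = (\<Sum>v\<in>S. F v x)" for F :: "'a \<Rightarrow> real \<Rightarrow> real"
proof (cases "finite S")
  case True then show ?thesis by (induction S rule: finite_induct) auto
next
  case False then show ?thesis by simp
qed

definition Rst :: "(real \<Rightarrow> real) \<Rightarrow> real \<Rightarrow> real" where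
  "Rst u = (\<lambda>s. if s \<in> {0..1} then u s else 0)"

lemma DIM:
  assumes W: "finite W" and sp: "\<forall>a\<in>{0<..<1}. Rst (ramp a) \<in> fv.span W"
  shows False
proof -
  have "infinite {0<..<1::real}" using infinite_Ioo[of 0 1] by simp
  then obtain A where A: "finite A" "card A = Suc (card W)" "A \<subseteq> {0<..<1::real}"
    using infinite_arbitrarily_large by blast
  define T where "T = (\<lambda>a. Rst (ramp a)) ` A"
  have inj: "inj_on (\<lambda>a. Rst (ramp a)) A"
  proof (rule inj_onI)
    fix a b assume ab: "a \<in> A" "b \<in> A" "Rst (ramp a) = Rst (ramp b)"
    show "a = b"
    proof (rule ccontr)
      assume "a \<noteq> b"
      then consider "a < b" | "b < a" by linarith
      then show False
      proof cases
        case 1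
        have "Rst (ramp a) b = Rst (ramp b) b" using ab by simp
        then show False using 1 ab A(3) unfolding Rst_def ramp_def by auto
      next
        case 2
        have "Rst (ramp a) a = Rst (ramp b) a" using ab by simp
        then show False using 2 ab A(3) unfolding Rst_def ramp_def by auto
      qed
    qed
  qed
  have cT: "card T = Suc (card W)" unfolding T_def using card_image[OF inj] A by simp
  have fT: "finite T" unfolding T_def using A by simp
  have ind: "fv.independent T"
  proof (rule fv.independent_if_scalars_zero[OF fT])
    fix u x assume s0: "(\<Sum>x\<in>T. sc (u x) x) = 0" and x: "x \<in> T"
    have "\<forall>s\<in>{0..1}. (\<Sum>a\<in>A. u (Rst (ramp a)) * ramp a s) = 0"
    proof
      fix s :: real assume s: "s \<in> {0..1}"
      have "(\<Sum>x\<in>T. sc (u x) x) s = 0" using s0 by simp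
      then have "(\<Sum>x\<in>T. u x * x s) = 0" by (simp add: sum_fun_app sc_def)
      then have "(\<Sum>a\<in>A. u (Rst (ramp a)) * Rst (ramp a) s) = 0"
        unfolding T_def by (simp add: sum.reindex[OF inj])
      then show "(\<Sum>a\<in>A. u (Rst (ramp a)) * ramp a s) = 0" using s by (simp add: Rst_def)
    qed
    then have "\<forall>a\<in>A. u (Rst (ramp a)) = 0" using ramp_indep[OF A(1) A(3), of "\<lambda>a. u (Rst (ramp a))"] by simp
    then show "u x = 0" using x unfolding T_def by auto
  qed
  have "T \<subseteq> fv.span W" unfolding T_def using sp A(3) by auto
  then have "card T \<le> card W" using fv.independent_span_bound[OF W ind] by simp
  then show False using cT by simp
qed



lemma adm_ha:
  assumes a: "a \<in> {-1..1}"
  shows "adm (\<lambda>s. 1 * ramp a s + (a * (1 - a) / 2) * ramp (-1) s + (-(1 - a^2)) * ramp 0 s)"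
    (is "adm ?h")
proof (rule adm_C)
  show "continuous_on {-1..1} ?h" by (intro continuous_intros)
  show "lipsch ?h" by (intro lipsch_comb3 lipsch_ramp)
  show "?h (-1) = 0" using a unfolding ramp_def by auto
  show "?h 1 = 0" using a unfolding ramp_def by (simp add: max_def power2_eq_square field_simps)
  have "integral {-1..1} ?h = 1 * integral {-1..1} (ramp a) + (a * (1 - a) / 2) * integral {-1..1} (ramp (-1))
         + (-(1 - a^2)) * integral {-1..1} (ramp 0)"
    by (subst integral_add, auto intro!: intcont continuous_intros)+
  also have "\<dots> = 0" using a by (simp add: integral_ramp power2_eq_square field_simps)
  finally show "integral {-1..1} ?h = 0" .
qed

lemma P_sum:
  fixes P :: "(real \<Rightarrow> real) \<Rightarrow> real \<Rightarrow> real" and g :: "'a \<Rightarrow> real \<Rightarrow> real"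
  assumes Plin: "\<forall>g h x y. P (\<lambda>s. x * g s + y * h s) = (\<lambda>s. x * P g s + y * P h s)"
    and K: "finite K"
  shows "P (\<lambda>s. \<Sum>k\<in>K. w k * g k s) = (\<lambda>s. \<Sum>k\<in>K. w k * P (g k) s)"
  using K
proof (induction K rule: finite_induct)
  case empty
  show ?case using Plin[rule_format, of 0 "\<lambda>_. 0" 0 "\<lambda>_. 0"] by simp
next
  case (insert k K)
  have "P (\<lambda>s. w k * g k s + 1 * (\<Sum>k\<in>K. w k * g k s)) = (\<lambda>s. w k * P (g k) s + 1 * P (\<lambda>s. \<Sum>k\<in>K. w k * g k s) s)"
    using Plin[rule_format, of "w k" "g k" 1 "\<lambda>s. \<Sum>k\<in>K. w k * g k s"] by simp
  then show ?case using insert by simp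
qed

lemma EXIST_GOOD:
  fixes f :: "'n::finite \<Rightarrow> real \<Rightarrow> real" and Ug :: "'i::finite \<Rightarrow> real \<Rightarrow> real"
  assumes f: "\<forall>j. f j \<in> GG0"
    and hk: "\<forall>k. adm (hk k)" "\<forall>k. Lmap f (hk k) = axis k 1"
    and Plin: "\<forall>g h x y. P (\<lambda>s. x * g s + y * h s) = (\<lambda>s. x * P g s + y * P h s)"
    and Pramp: "\<forall>a\<in>{0<..<1}. \<forall>s\<in>{0..1}. P (ramp a) s = \<kappa> * ramp a s" and k0: "\<kappa> \<noteq> 0"
  shows "\<exists>h. adm h \<and> Lmap f h = 0 \<and> \<not> (\<exists>e. \<forall>s\<in>{-1..1}. P h s = (\<Sum>i\<in>UNIV. e i * Ug i s))"
proof (rule ccontr)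
  assume "\<not> ?thesis"
  then have bad: "\<And>h. adm h \<Longrightarrow> Lmap f h = 0 \<Longrightarrow> \<exists>e. \<forall>s\<in>{-1..1}. P h s = (\<Sum>i\<in>UNIV. e i * Ug i s)"
    by blast
  have fG: "\<forall>j. f j \<in> GG" using f by (simp add: GG0_def)
  define W where "W = Rst ` (range Ug \<union> range (\<lambda>k. P (hk k)) \<union> {P (ramp (-1)), P (ramp 0)})"
  have W: "finite W" unfolding W_def by simp
  have "\<forall>a\<in>{0<..<1}. Rst (ramp a) \<in> fv.span W"
  proof
    fix a :: real assume a: "a \<in> {0<..<1}"
    have a1: "a \<in> {-1..1}" using a by auto
    define c1 where "c1 = a * (1 - a) / 2"
    define c2 where "c2 = -(1 - a^2)"
    define ha where "ha s = 1 * ramp a s + c1 * ramp (-1) s + c2 * ramp 0 s" for s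
    have aha: "adm ha" unfolding ha_def c1_def c2_def by (rule adm_ha[OF a1])
    define v where "v = Lmap f ha"
    define hh where "hh s = 1 * ha s + (-1) * (\<Sum>k\<in>UNIV. v$k * hk k s)" for s
    have ahs: "adm (\<lambda>s. \<Sum>k\<in>UNIV. v$k * hk k s)" by (rule adm_sum) (use hk in auto)
    have ahh: "adm hh" unfolding hh_def by (rule adm_comb[OF aha ahs])
    have "Lmap f hh = 1 *\<^sub>R Lmap f ha + (-1) *\<^sub>R Lmap f (\<lambda>s. \<Sum>k\<in>UNIV. v$k * hk k s)"
      unfolding hh_def by (rule Lmap_comb[OF fG]) (use aha ahs in \<open>auto simp: adm_def\<close>)
    also have "Lmap f (\<lambda>s. \<Sum>k\<in>UNIV. v$k * hk k s) = (\<Sum>k\<in>UNIV. v$k *\<^sub>R Lmap f (hk k))"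
      by (rule Lmap_sum[OF fG]) (use hk in \<open>auto simp: adm_def\<close>)
    finally have "Lmap f hh = 0" using hk(2) sum_axis_real[of v] unfolding v_def by simp
    then obtain e where e: "\<forall>s\<in>{-1..1}. P hh s = (\<Sum>i\<in>UNIV. e i * Ug i s)" using bad[OF ahh] by blast
    have Phh: "P hh = (\<lambda>s. 1 * P ha s + (-1) * (\<Sum>k\<in>UNIV. v$k * P (hk k) s))"
    proof -
      have "P hh = (\<lambda>s. 1 * P ha s + (-1) * P (\<lambda>s. \<Sum>k\<in>UNIV. v$k * hk k s) s)"
        unfolding hh_def using Plin[rule_format, of 1 ha "-1" "\<lambda>s. \<Sum>k\<in>UNIV. v$k * hk k s"] by simp
      then show ?thesis using P_sum[OF Plin, where K=UNIV and w="\<lambda>k. v$k" and g=hk] by simp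
    qed
    have Pha: "P ha = (\<lambda>s. 1 * P (ramp a) s + c1 * P (ramp (-1)) s + c2 * P (ramp 0) s)"
    proof -
      have "P ha = P (\<lambda>s. 1 * (1 * ramp a s + c1 * ramp (-1) s) + c2 * ramp 0 s)"
        unfolding ha_def by simp
      also have "\<dots> = (\<lambda>s. 1 * P (\<lambda>s. 1 * ramp a s + c1 * ramp (-1) s) s + c2 * P (ramp 0) s)"
        by (rule Plin[rule_format, of 1 "\<lambda>s. 1 * ramp a s + c1 * ramp (-1) s" c2 "ramp 0"])
      also have "P (\<lambda>s. 1 * ramp a s + c1 * ramp (-1) s) = (\<lambda>s. 1 * P (ramp a) s + c1 * P (ramp (-1)) s)"
        by (rule Plin[rule_format, of 1 "ramp a" c1 "ramp (-1)"])
      finally show ?thesis by simp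
    qed
    define G where "G s = (\<Sum>i\<in>UNIV. e i * Ug i s) + (\<Sum>k\<in>UNIV. v$k * P (hk k) s) + (- c1) * P (ramp (-1)) s + (- c2) * P (ramp 0) s" for s
    have G: "\<kappa> * ramp a s = G s" if s: "s \<in> {0..1}" for s
    proof -
      have "P hh s = (\<Sum>i\<in>UNIV. e i * Ug i s)" using e s by auto
      then have "P (ramp a) s = G s" unfolding G_def Phh Pha by simp
      then show ?thesis using Pramp a s by simp
    qed
    define X where "X = (\<Sum>i\<in>UNIV. sc (e i) (Rst (Ug i))) + (\<Sum>k\<in>UNIV. sc (v$k) (Rst (P (hk k))))
       + sc (- c1) (Rst (P (ramp (-1)))) + sc (- c2) (Rst (P (ramp 0)))"
    have XG: "X s = Rst G s" for s
      unfolding X_def G_def Rst_def by (cases "0 \<le> s \<and> s \<le> 1") (auto simp: sum_fun_app sc_def)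
    have eq: "Rst (ramp a) = sc (1 / \<kappa>) X"
    proof
      fix s show "Rst (ramp a) s = sc (1 / \<kappa>) X s"
        unfolding sc_def XG using G k0 unfolding Rst_def by (auto simp: field_simps)
    qed
    have "X \<in> fv.span W"
      unfolding X_def W_def
      by (intro fv.span_add fv.span_sum fv.span_scale fv.span_base) auto
    then show "Rst (ramp a) \<in> fv.span W" unfolding eq by (rule fv.span_scale)
  qed
  then show False using DIM[OF W] by blast
qed

lemma GG0_conv:
  assumes g: "g \<in> GG0" and h: "h \<in> GG0" and u: "0 \<le> u" "u \<le> 1"
  shows "(\<lambda>x. (1 - u) * g x + u * h x) \<in> GG0"
proof -
  have gG: "g \<in> GG" and hG: "h \<in> GG" using g h by (auto simp: GG0_def)
  have c: "continuous_on {-1..1} (\<lambda>x. (1 - u) * g x + u * h x)"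
    by (intro continuous_intros GG_D(1)[OF gG] GG_D(1)[OF hG])
  have m: "strict_mono_on {-1..1} (\<lambda>x. (1 - u) * g x + u * h x)"
  proof (rule strict_mono_onI)
    fix r s :: real assume rs: "r \<in> {-1..1}" "s \<in> {-1..1}" "r < s"
    have "g r < g s" "h r < h s" using strict_mono_onD[OF GG_D(2)[OF gG] rs] strict_mono_onD[OF GG_D(2)[OF hG] rs] by auto
    then show "(1 - u) * g r + u * h r < (1 - u) * g s + u * h s"
    proof (cases "u = 1")
      case True then show ?thesis using \<open>h r < h s\<close> by simp
    next
      case False
      then have "(1 - u) * g r < (1 - u) * g s" using u \<open>g r < g s\<close> by (intro mult_strict_left_mono) auto
      moreover have "u * h r \<le> u * h s" using u \<open>h r < h s\<close> by (intro mult_left_mono) auto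
      ultimately show ?thesis by linarith
    qed
  qed
  have im: "(\<lambda>x. (1 - u) * g x + u * h x) ` {-1..1} \<subseteq> {-1..1}"
  proof
    fix y assume "y \<in> (\<lambda>x. (1 - u) * g x + u * h x) ` {-1..1}"
    then obtain x where x: "x \<in> {-1..1}" "y = (1 - u) * g x + u * h x" by auto
    have gx: "g x \<in> {-1..1}" and hx: "h x \<in> {-1..1}" using GG_range[OF gG x(1)] GG_range[OF hG x(1)] by auto
    have "(1 - u) * (-1) \<le> (1 - u) * g x" by (rule mult_left_mono) (use gx u in auto)
    moreover have "u * (-1) \<le> u * h x" by (rule mult_left_mono) (use hx u in auto)
    moreover have "(1 - u) * g x \<le> (1 - u) * 1" by (rule mult_left_mono) (use gx u in auto)
    moreover have "u * h x \<le> u * 1" by (rule mult_left_mono) (use hx u in auto)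
    ultimately have "-1 \<le> (1 - u) * g x + u * h x" "(1 - u) * g x + u * h x \<le> 1" by (simp_all add: algebra_simps)
    then show "y \<in> {-1..1}" using x by auto
  qed
  have "integral {-1..1} (\<lambda>x. (1 - u) * g x + u * h x) = (1 - u) * integral {-1..1} g + u * integral {-1..1} h"
    by (subst integral_add) (auto intro!: intcont continuous_intros GG_D(1)[OF gG] GG_D(1)[OF hG])
  then have "integral {-1..1} (\<lambda>x. (1 - u) * g x + u * h x) = 0" using g h by (simp add: GG0_def)
  then show ?thesis unfolding GG0_def GG_def using c m im GG_D(3,4)[OF gG] GG_D(3,4)[OF hG] by auto
qed

lemma GG00_GG0: "g \<in> GG00 \<Longrightarrow> g \<in> GG0"
  unfolding GG00_def GG0_def
  by (auto intro!: integral_odd simp: GG_def)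

lemma GG00_conv:
  assumes g: "g \<in> GG00" and h: "h \<in> GG00" and u: "0 \<le> u" "u \<le> 1"
  shows "(\<lambda>x. (1 - u) * g x + u * h x) \<in> GG00"
proof -
  have "(\<lambda>x. (1 - u) * g x + u * h x) \<in> GG0" using GG0_conv[OF GG00_GG0[OF g] GG00_GG0[OF h] u] .
  moreover have "\<forall>t\<in>{-1..1}. (1 - u) * g (-t) + u * h (-t) = - ((1 - u) * g t + u * h t)"
    using g h unfolding GG00_def by (simp add: algebra_simps)
  ultimately show ?thesis unfolding GG00_def GG0_def by auto
qed

lemma conv_img:
  assumes f: "\<forall>j. f j \<in> GG" and cl: "\<And>g h u. g \<in> S \<Longrightarrow> h \<in> S \<Longrightarrow> 0 \<le> u \<Longrightarrow> u \<le> 1 \<Longrightarrow> (\<lambda>x. (1 - u) * g x + u * h x) \<in> S"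
    and S: "S \<subseteq> GG"
  shows "convex (Lmap f ` S)"
  unfolding convex_def
proof (intro ballI allI impI)
  fix x y and u v :: real assume xy: "x \<in> Lmap f ` S" "y \<in> Lmap f ` S" and uv: "0 \<le> u" "0 \<le> v" "u + v = 1"
  then obtain g h where gh: "g \<in> S" "h \<in> S" "x = Lmap f g" "y = Lmap f h" by auto
  have cg: "continuous_on {-1..1} g" "continuous_on {-1..1} h" using gh S GG_D(1) by auto
  have "Lmap f (\<lambda>s. (1 - v) * g s + v * h s) = (1 - v) *\<^sub>R Lmap f g + v *\<^sub>R Lmap f h"
    by (rule Lmap_comb[OF f cg])
  moreover have "u = 1 - v" using uv by simp
  ultimately have eq: "Lmap f (\<lambda>s. (1 - v) * g s + v * h s) = u *\<^sub>R x + v *\<^sub>R y" using gh(3,4) by simp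
  have mem: "(\<lambda>s. (1 - v) * g s + v * h s) \<in> S" using cl[OF gh(1,2)] uv by simp
  show "u *\<^sub>R x + v *\<^sub>R y \<in> Lmap f ` S" using image_eqI[where f="Lmap f", OF eq[symmetric] mem] .
qed



lemma ident_GG0: "(\<lambda>s. s) \<in> GG0"
proof -
  have "(\<lambda>s. s + (\<lambda>s. 0) s) \<in> GG0" by (rule pert_GG0) (use adm_zero in auto)
  then show ?thesis by simp
qed

lemma EQ:
  fixes f :: "'n::finite \<Rightarrow> real \<Rightarrow> real" and Ug :: "'i::finite \<Rightarrow> real \<Rightarrow> real"
    and P :: "(real \<Rightarrow> real) \<Rightarrow> real \<Rightarrow> real"
  assumes f: "\<forall>j. f j \<in> GG0"
    and hk: "\<forall>k. adm (hk k)" "\<forall>k. Lmap f (hk k) = axis k 1"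
    and Plin: "\<forall>g h x y. P (\<lambda>s. x * g s + y * h s) = (\<lambda>s. x * P g s + y * P h s)"
    and Pramp: "\<forall>a\<in>{0<..<1}. \<forall>s\<in>{0..1}. P (ramp a) s = \<kappa> * ramp a s" and k0: "\<kappa> \<noteq> 0"
    and good: "\<forall>g\<in>GG0. \<not> (\<exists>e. \<forall>s\<in>{-1..1}. P g s = (\<Sum>i\<in>UNIV. e i * Ug i s)) \<longrightarrow> g \<in> S"
    and Ssub: "S \<subseteq> GG0"
  shows "interior (Lmap f ` GG0) = interior (Lmap f ` S)"
proof -
  have fG: "\<forall>j. f j \<in> GG" using f by (simp add: GG0_def)
  obtain hh where hh: "adm hh" "Lmap f hh = 0" and nb: "\<not> (\<exists>e. \<forall>s\<in>{-1..1}. P hh s = (\<Sum>i\<in>UNIV. e i * Ug i s))"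
    using EXIST_GOOD[OF f hk Plin Pramp k0, where Ug=Ug] by blast
  obtain K where K: "\<forall>s\<in>{-1..1}. \<forall>t\<in>{-1..1}. \<bar>hh s - hh t\<bar> \<le> K * \<bar>s - t\<bar>"
    using hh(1) unfolding adm_def lipsch_def by blast
  define \<epsilon> where "\<epsilon> = 1 / (2 * (\<bar>K\<bar> + 1))"
  have e0: "\<epsilon> > 0" unfolding \<epsilon>_def by (simp add: add_pos_nonneg)
  have eK: "\<epsilon> * \<bar>K\<bar> < 1" unfolding \<epsilon>_def by (simp add: field_simps)
  define q where "q s = 1 * s + \<epsilon> * hh s" for s
  have ahe: "adm (\<lambda>s. \<epsilon> * hh s)" using adm_comb[OF hh(1) hh(1), of \<epsilon> 0] by simp
  have small: "\<forall>s\<in>{-1..1}. \<forall>t\<in>{-1..1}. s < t \<longrightarrow> \<epsilon> * hh s - \<epsilon> * hh t < t - s"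
  proof (intro ballI impI)
    fix s t :: real assume st: "s \<in> {-1..1}" "t \<in> {-1..1}" "s < t"
    have "\<bar>hh s - hh t\<bar> \<le> K * \<bar>s - t\<bar>" using K st(1,2) by blast
    then have "hh s - hh t \<le> \<bar>K\<bar> * (t - s)" using st(3)
      by (smt (verit, best) abs_ge_self mult_right_mono)
    then have "\<epsilon> * (hh s - hh t) \<le> \<epsilon> * (\<bar>K\<bar> * (t - s))" using e0 by (intro mult_left_mono) auto
    also have "\<dots> = (\<epsilon> * \<bar>K\<bar>) * (t - s)" by simp
    also have "\<dots> < t - s" using eK st(3) by simp
    finally show "\<epsilon> * hh s - \<epsilon> * hh t < t - s" by (simp add: right_diff_distrib)
  qed
  have qG: "q \<in> GG0" unfolding q_def using pert_GG0[OF ahe small] by simp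
  have Lq: "Lmap f q = 0"
  proof -
    have "Lmap f q = 1 *\<^sub>R Lmap f (\<lambda>s. s) + \<epsilon> *\<^sub>R Lmap f hh"
      unfolding q_def by (rule Lmap_comb[OF fG]) (use hh(1) in \<open>auto simp: adm_def intro: continuous_intros\<close>)
    then show ?thesis using Lmap_ident[OF f] hh(2) by simp
  qed
  have Pq: "P q = (\<lambda>s. 1 * P (\<lambda>s. s) s + \<epsilon> * P hh s)"
    unfolding q_def by (rule Plin[rule_format, of 1 "\<lambda>s. s" \<epsilon> hh])
  have main: "interior (Lmap f ` GG0) \<subseteq> Lmap f ` S"
  proof
    fix y assume "y \<in> interior (Lmap f ` GG0)"
    then obtain r where r: "r > 0" "ball y r \<subseteq> Lmap f ` GG0" using mem_interior by blast
    define \<sigma> where "\<sigma> = r / (2 * (norm y + 1))"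
    have ny: "norm y + 1 > 0" using norm_ge_zero[of y] by linarith
    have s0: "\<sigma> > 0" unfolding \<sigma>_def using r(1) ny by simp
    have sy: "\<sigma> * norm y < r"
    proof -
      have "\<sigma> * norm y \<le> \<sigma> * (norm y + 1)" using s0 by simp
      also have "\<dots> = r / 2" unfolding \<sigma>_def using ny by (simp add: field_simps)
      finally show ?thesis using r(1) by simp
    qed
    have "y - (1 + \<sigma>) *\<^sub>R y = - (\<sigma> *\<^sub>R y)" by (simp add: scaleR_add_left)
    then have "dist y ((1 + \<sigma>) *\<^sub>R y) = \<sigma> * norm y" using s0 by (simp add: dist_norm)
    then have "(1 + \<sigma>) *\<^sub>R y \<in> ball y r" using sy by simp
    then have "(1 + \<sigma>) *\<^sub>R y \<in> Lmap f ` GG0" using r(2) by (rule subsetD[rotated])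
    then obtain g1 where g1a: "g1 \<in> GG0" and g1b: "(1 + \<sigma>) *\<^sub>R y = Lmap f g1" by (rule imageE)
    then have g1: "g1 \<in> GG0" "Lmap f g1 = (1 + \<sigma>) *\<^sub>R y" by simp_all
    define lam where "lam = \<sigma> / (1 + \<sigma>)"
    have l01: "0 \<le> lam" "lam \<le> 1" "lam > 0" unfolding lam_def using s0 by auto
    have l1: "(1 - lam) * (1 + \<sigma>) = 1" unfolding lam_def using s0 by (simp add: field_simps)
    define g2 where "g2 x = (1 - lam) * g1 x + lam * x" for x
    define g3 where "g3 x = (1 - lam) * g1 x + lam * q x" for x
    have g2G: "g2 \<in> GG0" unfolding g2_def using GG0_conv[OF g1(1) ident_GG0 l01(1,2)] .
    have g3G: "g3 \<in> GG0" unfolding g3_def using GG0_conv[OF g1(1) qG l01(1,2)] .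
    have cg1: "continuous_on {-1..1} g1" using g1(1) GG_D(1) by (auto simp: GG0_def)
    have cq: "continuous_on {-1..1} q" using qG GG_D(1) by (auto simp: GG0_def)
    have Lg2: "Lmap f g2 = y"
    proof -
      have "Lmap f g2 = (1 - lam) *\<^sub>R Lmap f g1 + lam *\<^sub>R Lmap f (\<lambda>s. s)"
        unfolding g2_def by (rule Lmap_comb[OF fG cg1]) (auto intro: continuous_intros)
      then show ?thesis using g1(2) Lmap_ident[OF f] l1 by simp
    qed
    have Lg3: "Lmap f g3 = y"
    proof -
      have "Lmap f g3 = (1 - lam) *\<^sub>R Lmap f g1 + lam *\<^sub>R Lmap f q"
        unfolding g3_def by (rule Lmap_comb[OF fG cg1 cq])
      then show ?thesis using g1(2) Lq l1 by simp
    qed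
    have Pg2: "P g2 = (\<lambda>s. (1 - lam) * P g1 s + lam * P (\<lambda>s. s) s)"
      unfolding g2_def by (rule Plin[rule_format, of "1 - lam" g1 lam "\<lambda>s. s"])
    have Pg3: "P g3 = (\<lambda>s. (1 - lam) * P g1 s + lam * P q s)"
      unfolding g3_def by (rule Plin[rule_format, of "1 - lam" g1 lam q])
    have "g2 \<in> S \<or> g3 \<in> S"
    proof (rule ccontr)
      assume "\<not> (g2 \<in> S \<or> g3 \<in> S)"
      then obtain e2 e3 where e2: "\<forall>s\<in>{-1..1}. P g2 s = (\<Sum>i\<in>UNIV. e2 i * Ug i s)"
        and e3: "\<forall>s\<in>{-1..1}. P g3 s = (\<Sum>i\<in>UNIV. e3 i * Ug i s)"
        using good g2G g3G by blast
      have "\<forall>s\<in>{-1..1}. P hh s = (\<Sum>i\<in>UNIV. ((e3 i - e2 i) / (lam * \<epsilon>)) * Ug i s)"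
      proof
        fix s :: real assume s: "s \<in> {-1..1}"
        have "P g3 s - P g2 s = lam * \<epsilon> * P hh s" unfolding Pg2 Pg3 Pq by (simp add: algebra_simps)
        moreover have "P g3 s - P g2 s = (\<Sum>i\<in>UNIV. (e3 i - e2 i) * Ug i s)"
          using e2 e3 s by (simp add: sum_subtractf left_diff_distrib)
        ultimately have "P hh s = (\<Sum>i\<in>UNIV. (e3 i - e2 i) * Ug i s) / (lam * \<epsilon>)"
          using l01(3) e0 by (simp add: field_simps)
        then show "P hh s = (\<Sum>i\<in>UNIV. ((e3 i - e2 i) / (lam * \<epsilon>)) * Ug i s)"
          by (simp add: sum_divide_distrib)
      qed
      then have "\<exists>e. \<forall>s\<in>{-1..1}. P hh s = (\<Sum>i\<in>UNIV. e i * Ug i s)"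
        by (intro exI[where x="\<lambda>i. (e3 i - e2 i) / (lam * \<epsilon>)"])
      then show False using nb by simp
    qed
    then show "y \<in> Lmap f ` S"
    proof
      assume "g2 \<in> S" then show ?thesis using image_eqI[where f="Lmap f", OF Lg2[symmetric]] by blast
    next
      assume "g3 \<in> S" then show ?thesis using image_eqI[where f="Lmap f", OF Lg3[symmetric]] by blast
    qed
  qed
  have "interior (Lmap f ` GG0) \<subseteq> interior (Lmap f ` S)"
    using interior_maximal[OF main open_interior] .
  moreover have "interior (Lmap f ` S) \<subseteq> interior (Lmap f ` GG0)"
    by (rule interior_mono) (use Ssub in blast)
  ultimately show ?thesis by blast
qed



lemma sum_neg_div: "(\<Sum>j\<in>S. (- a j / d) * b j) = - (\<Sum>j\<in>S. a j * b j) / (d::real)"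
  by (simp add: sum_divide_distrib sum_negf)

lemma aux2: "(- x / d) * s - B / d = - (x * s + B) / (d::real)"
  by (cases "d = 0") (simp_all add: field_simps)

lemma GOOD1:
  fixes f :: "'n::finite \<Rightarrow> real \<Rightarrow> real"
  assumes lin: "LIN f" and g: "g \<in> GG0"
    and nb: "\<not> (\<exists>e. \<forall>s\<in>{-1..1}. (\<lambda>g. g) g s = (\<Sum>i\<in>UNIV. e i * (\<lambda>k. case k of None \<Rightarrow> ident | Some j \<Rightarrow> f j) i s))"
  shows "LIN (ext_tuple f g)"
  unfolding LIN_def
proof (intro conjI allI)
  fix k show "ext_tuple f g k \<in> GG0" using lin g unfolding LIN_def ext_tuple_def by (cases k) auto
next
  show "lin_indep_fam (\<lambda>k. case k of None \<Rightarrow> ident | Some j \<Rightarrow> ext_tuple f g j)"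
    unfolding lin_indep_fam_def
  proof (rule allI, rule impI)
    fix c :: "'n option option \<Rightarrow> real"
    assume h: "\<forall>t\<in>{-1..1}. (\<Sum>j\<in>UNIV. c j * (case j of None \<Rightarrow> ident | Some j \<Rightarrow> ext_tuple f g j) t) = 0"
    have h2: "c None * t + c (Some None) * g t + (\<Sum>j\<in>UNIV. c (Some (Some j)) * f j t) = 0"
      if t: "t \<in> {-1..1}" for t
      using h[rule_format, OF t] unfolding sum_option by (simp add: ext_tuple_def ident_def add.assoc)
    have cN: "c (Some None) = 0"
    proof (rule ccontr)
      assume c0: "c (Some None) \<noteq> 0"
      define e where "e i = (case i of None \<Rightarrow> - c None / c (Some None) | Some j \<Rightarrow> - c (Some (Some j)) / c (Some None))" for i
      have "\<forall>s\<in>{-1..1}. g s = (\<Sum>i\<in>UNIV. e i * (case i of None \<Rightarrow> ident | Some j \<Rightarrow> f j) s)"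
      proof
        fix s :: real assume s: "s \<in> {-1..1}"
        have "(\<Sum>i\<in>UNIV. e i * (case i of None \<Rightarrow> ident | Some j \<Rightarrow> f j) s)
              = - (c None * s + (\<Sum>j\<in>UNIV. c (Some (Some j)) * f j s)) / c (Some None)"
        proof -
          have "(\<Sum>i\<in>UNIV. e i * (case i of None \<Rightarrow> ident | Some j \<Rightarrow> f j) s)
                = (- c None / c (Some None)) * s + (\<Sum>j\<in>UNIV. (- c (Some (Some j)) / c (Some None)) * f j s)"
            unfolding sum_option e_def by (simp add: ident_def)
          also have "\<dots> = (- c None / c (Some None)) * s - (\<Sum>j\<in>UNIV. c (Some (Some j)) * f j s) / c (Some None)"
            unfolding sum_neg_div by simp
          also have "\<dots> = - (c None * s + (\<Sum>j\<in>UNIV. c (Some (Some j)) * f j s)) / c (Some None)"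
            using aux2 by blast
          finally show ?thesis .
        qed
        also have "\<dots> = g s" using h2[OF s] c0 by (simp add: field_simps)
        finally show "g s = (\<Sum>i\<in>UNIV. e i * (case i of None \<Rightarrow> ident | Some j \<Rightarrow> f j) s)" by simp
      qed
      then show False using nb by auto
    qed
    define cc where "cc k = (case k of None \<Rightarrow> c None | Some j \<Rightarrow> c (Some (Some j)))" for k
    have "\<forall>t\<in>{-1..1}. (\<Sum>k\<in>UNIV. cc k * (case k of None \<Rightarrow> ident | Some j \<Rightarrow> f j) t) = 0"
    proof
      fix t :: real assume t: "t \<in> {-1..1}"
      show "(\<Sum>k\<in>UNIV. cc k * (case k of None \<Rightarrow> ident | Some j \<Rightarrow> f j) t) = 0"
        unfolding sum_option cc_def using h2[OF t] cN by (simp add: ident_def)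
    qed
    then have cc0: "\<forall>k. cc k = 0" using lin unfolding LIN_def lin_indep_fam_def by blast
    show "\<forall>j. c j = 0"
    proof
      fix j :: "'n option option"
      show "c j = 0"
      proof (cases j)
        case None then show ?thesis using cc0[rule_format, of None] by (simp add: cc_def)
      next
        case (Some k) then show ?thesis
          using cN cc0[rule_format, of "Some (the k)"] by (cases k) (auto simp: cc_def)
      qed
    qed
  qed
qed

lemma GOOD2:
  fixes f :: "'n::finite \<Rightarrow> real \<Rightarrow> real"
  assumes lin: "LINp f" and g: "g \<in> GG0"
    and nb: "\<not> (\<exists>e. \<forall>s\<in>{-1..1}. even_part g s = (\<Sum>i\<in>UNIV. e i * (\<lambda>j. even_part (f j)) i s))"
  shows "LINp (ext_tuple f g)"
  unfolding LINp_def
proof (intro conjI allI)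
  fix k show "ext_tuple f g k \<in> GG0" using lin g unfolding LINp_def ext_tuple_def by (cases k) auto
next
  show "lin_indep_fam (\<lambda>j. even_part (ext_tuple f g j))"
    unfolding lin_indep_fam_def
  proof (rule allI, rule impI)
    fix c :: "'n option \<Rightarrow> real"
    assume h: "\<forall>t\<in>{-1..1}. (\<Sum>j\<in>UNIV. c j * even_part (ext_tuple f g j) t) = 0"
    have h2: "c None * even_part g t + (\<Sum>j\<in>UNIV. c (Some j) * even_part (f j) t) = 0"
      if t: "t \<in> {-1..1}" for t
      using h[rule_format, OF t] unfolding sum_option by (simp add: ext_tuple_def)
    have cN: "c None = 0"
    proof (rule ccontr)
      assume c0: "c None \<noteq> 0"
      define e where "e j = - c (Some j) / c None" for j
      have "\<forall>s\<in>{-1..1}. even_part g s = (\<Sum>i\<in>UNIV. e i * even_part (f i) s)"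
      proof
        fix s :: real assume s: "s \<in> {-1..1}"
        have "(\<Sum>i\<in>UNIV. e i * even_part (f i) s) = - (\<Sum>j\<in>UNIV. c (Some j) * even_part (f j) s) / c None"
          unfolding e_def by (rule sum_neg_div)
        also have "\<dots> = even_part g s" using h2[OF s] c0 by (simp add: field_simps)
        finally show "even_part g s = (\<Sum>i\<in>UNIV. e i * even_part (f i) s)" by simp
      qed
      then show False using nb by auto
    qed
    have hz: "\<forall>t\<in>{-1..1}. (\<Sum>j\<in>UNIV. c (Some j) * even_part (f j) t) = 0"
      using h2 cN by simp
    have L: "\<forall>c'::'n \<Rightarrow> real. (\<forall>t\<in>{-1..1}. (\<Sum>j\<in>UNIV. c' j * even_part (f j) t) = 0) \<longrightarrow> (\<forall>j. c' j = 0)"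
      using lin unfolding LINp_def lin_indep_fam_def by blast
    have cc0: "\<forall>j. c (Some j) = 0" using L[rule_format, of "\<lambda>j. c (Some j)"] hz by simp
    show "\<forall>j. c j = 0"
    proof
      fix j :: "'n option"
      show "c j = 0" using cN cc0 by (cases j) auto
    qed
  qed
qed



lemma interior0:
  fixes f :: "'n::finite \<Rightarrow> real \<Rightarrow> real"
  assumes f: "\<forall>j. f j \<in> GG0" and hk: "\<forall>k. adm (hk k)" "\<forall>k. Lmap f (hk k) = axis k 1"
    and odd: "\<forall>k. \<forall>t\<in>{-1..1}. hk k (-t) = - hk k t \<or> T = GG0"
    and T: "T = GG0 \<or> T = GG00"
  shows "0 \<in> interior (Lmap f ` T)"
proof -
  obtain \<delta> where d: "\<delta> > 0" and dd: "\<forall>t::real^'n. norm t < \<delta> \<longrightarrow>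
     (\<lambda>s. s + (\<Sum>k\<in>UNIV. t$k * hk k s)) \<in> GG0 \<and> Lmap f (\<lambda>s. s + (\<Sum>k\<in>UNIV. t$k * hk k s)) = t"
    using INT[OF f hk(1) hk(2)] by blast
  have "ball 0 \<delta> \<subseteq> Lmap f ` T"
  proof
    fix t :: "real^'n" assume "t \<in> ball 0 \<delta>"
    then have tn: "norm t < \<delta>" by simp
    have q0: "(\<lambda>s. s + (\<Sum>k\<in>UNIV. t$k * hk k s)) \<in> GG0" and Lq: "Lmap f (\<lambda>s. s + (\<Sum>k\<in>UNIV. t$k * hk k s)) = t"
      using dd tn by auto
    have "(\<lambda>s. s + (\<Sum>k\<in>UNIV. t$k * hk k s)) \<in> T"
    proof (cases "T = GG0")
      case True then show ?thesis using q0 by simp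
    next
      case False
      then have TT: "T = GG00" using T by simp
      have "\<forall>k. \<forall>u\<in>{-1..1}. hk k (-u) = - hk k u" using odd False by blast
      then have "\<forall>u\<in>{-1..1}. (-u) + (\<Sum>k\<in>UNIV. t$k * hk k (-u)) = - (u + (\<Sum>k\<in>UNIV. t$k * hk k u))"
        by (simp add: sum_negf[symmetric])
      then show ?thesis unfolding TT GG00_def using q0 by (simp add: GG0_def)
    qed
    then show "t \<in> Lmap f ` T" using image_eqI[where f="Lmap f", OF Lq[symmetric]] by blast
  qed
  then show ?thesis using d mem_interior by blast
qed

lemma hk_exists:
  fixes f :: "'n::finite \<Rightarrow> real \<Rightarrow> real"
  assumes "\<forall>v. \<exists>h\<in>A. Lmap f h = v"
  shows "\<exists>hk. \<forall>k. hk k \<in> A \<and> Lmap f (hk k) = axis k 1"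
proof -
  have "\<forall>k. \<exists>h. h \<in> A \<and> Lmap f h = axis k 1" using assms by blast
  then show ?thesis by (rule choice)
qed

theorem theorem4p4:
  fixes f :: "'n::finite \<Rightarrow> real \<Rightarrow> real"
  assumes f_G0: "\<forall>j. f j \<in> GG0"
  shows "(LIN f \<longrightarrow>
            convex (interior (Lmap f ` GG0)) \<and> 0 \<in> interior (Lmap f ` GG0) \<and>
            interior (Lmap f ` GG0) =
              interior (Lmap f ` {g \<in> GG0. LIN (ext_tuple f g)}))
       \<and> (LINp f \<longrightarrow>
            convex (interior (Lmap f ` GG00)) \<and> 0 \<in> interior (Lmap f ` GG00) \<and>
            interior (Lmap f ` GG0) =
              interior (Lmap f ` {g \<in> GG0. LINp (ext_tuple f g)}))"
proof -
  have fG: "\<forall>j. f j \<in> GG" using f_G0 by (simp add: GG0_def)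
  have G0G: "GG0 \<subseteq> GG" by (auto simp: GG0_def)
  have G00G: "GG00 \<subseteq> GG" by (auto simp: GG00_def)
  have cvx0: "convex (interior (Lmap f ` GG0))"
    by (rule convex_interior, rule conv_img[OF fG _ G0G]) (rule GG0_conv)
  have cvx00: "convex (interior (Lmap f ` GG00))"
    by (rule convex_interior, rule conv_img[OF fG _ G00G]) (rule GG00_conv)
  have part1: "convex (interior (Lmap f ` GG0)) \<and> 0 \<in> interior (Lmap f ` GG0) \<and>
            interior (Lmap f ` GG0) = interior (Lmap f ` {g \<in> GG0. LIN (ext_tuple f g)})"
    if lin: "LIN f"
  proof -
    have "\<forall>v. \<exists>h\<in>Collect adm. Lmap f h = v"
    proof
      fix v :: "real^'n"
      show "\<exists>h\<in>Collect adm. Lmap f h = v"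
      proof (rule SURJ[OF fG])
        show "\<forall>g\<in>Collect adm. \<forall>h\<in>Collect adm. \<forall>x y. (\<lambda>s. x * g s + y * h s) \<in> Collect adm"
          using adm_comb by blast
        show "(\<lambda>s. 0) \<in> Collect adm" using adm_zero by simp
        show "\<forall>h\<in>Collect adm. continuous_on {-1..1} h" by (simp add: adm_def)
        show "\<forall>c::real^'n. c \<noteq> 0 \<longrightarrow> (\<exists>h\<in>Collect adm. c \<bullet> Lmap f h \<noteq> 0)"
          by (rule NONDEG1[OF f_G0 lin])
      qed
    qed
    then obtain hk where hk0: "\<forall>k. hk k \<in> Collect adm \<and> Lmap f (hk k) = axis k 1"
      using hk_exists by blast
    then have hk: "\<forall>k. adm (hk k)" "\<forall>k. Lmap f (hk k) = axis k 1" by auto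
    have i0: "0 \<in> interior (Lmap f ` GG0)"
      by (rule interior0[OF f_G0 hk]) auto
    have eq: "interior (Lmap f ` GG0) = interior (Lmap f ` {g \<in> GG0. LIN (ext_tuple f g)})"
    proof (rule EQ[OF f_G0 hk, where P="\<lambda>g. g" and \<kappa>=1 and Ug="\<lambda>k. case k of None \<Rightarrow> ident | Some j \<Rightarrow> f j"])
      show "\<forall>g h x y. (\<lambda>g. g) (\<lambda>s. x * g s + y * h s) = (\<lambda>s. x * (\<lambda>g. g) g s + y * (\<lambda>g. g) h s)" by simp
      show "\<forall>a\<in>{0<..<1}. \<forall>s\<in>{0..1}. (\<lambda>g. g) (ramp a) s = 1 * ramp a s" by simp
      show "(1::real) \<noteq> 0" by simp
      show "\<forall>g\<in>GG0. \<not> (\<exists>e. \<forall>s\<in>{-1..1}. (\<lambda>g. g) g s = (\<Sum>i\<in>UNIV. e i * (case i of None \<Rightarrow> ident | Some j \<Rightarrow> f j) s)) \<longrightarrow>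
          g \<in> {g \<in> GG0. LIN (ext_tuple f g)}"
        using GOOD1[OF lin] by auto
      show "{g \<in> GG0. LIN (ext_tuple f g)} \<subseteq> GG0" by auto
    qed
    show ?thesis using cvx0 i0 eq by blast
  qed
  have part2: "convex (interior (Lmap f ` GG00)) \<and> 0 \<in> interior (Lmap f ` GG00) \<and>
            interior (Lmap f ` GG0) = interior (Lmap f ` {g \<in> GG0. LINp (ext_tuple f g)})"
    if lin: "LINp f"
  proof -
    have "\<forall>v. \<exists>h\<in>Collect admo. Lmap f h = v"
    proof
      fix v :: "real^'n"
      show "\<exists>h\<in>Collect admo. Lmap f h = v"
      proof (rule SURJ[OF fG])
        show "\<forall>g\<in>Collect admo. \<forall>h\<in>Collect admo. \<forall>x y. (\<lambda>s. x * g s + y * h s) \<in> Collect admo"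
          using admo_comb by blast
        show "(\<lambda>s. 0) \<in> Collect admo" using adm_zero by simp
        show "\<forall>h\<in>Collect admo. continuous_on {-1..1} h" by (simp add: admo_def adm_def)
        show "\<forall>c::real^'n. c \<noteq> 0 \<longrightarrow> (\<exists>h\<in>Collect admo. c \<bullet> Lmap f h \<noteq> 0)"
          by (rule NONDEG2[OF f_G0 lin])
      qed
    qed
    then obtain hk where hk0: "\<forall>k. hk k \<in> Collect admo \<and> Lmap f (hk k) = axis k 1"
      using hk_exists by blast
    then have hko: "\<forall>k. admo (hk k)" and hkL: "\<forall>k. Lmap f (hk k) = axis k 1" by auto
    have hk: "\<forall>k. adm (hk k)" using hko by (simp add: admo_def)
    have i0: "0 \<in> interior (Lmap f ` GG00)"
      by (rule interior0[OF f_G0 hk hkL]) (use hko in \<open>auto simp: admo_def\<close>)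
    have eq: "interior (Lmap f ` GG0) = interior (Lmap f ` {g \<in> GG0. LINp (ext_tuple f g)})"
    proof (rule EQ[OF f_G0 hk hkL, where P="even_part" and \<kappa>="1/2" and Ug="\<lambda>j. even_part (f j)"])
      show "\<forall>g h x y. even_part (\<lambda>s. x * g s + y * h s) = (\<lambda>s. x * even_part g s + y * even_part h s)"
        by (simp add: even_part_def fun_eq_iff algebra_simps add_divide_distrib)
      show "\<forall>a\<in>{0<..<1}. \<forall>s\<in>{0..1}. even_part (ramp a) s = 1 / 2 * ramp a s"
        by (auto simp: even_part_def ramp_def max_def)
      show "(1 / 2 :: real) \<noteq> 0" by simp
      show "\<forall>g\<in>GG0. \<not> (\<exists>e. \<forall>s\<in>{-1..1}. even_part g s = (\<Sum>i\<in>UNIV. e i * even_part (f i) s)) \<longrightarrow>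
          g \<in> {g \<in> GG0. LINp (ext_tuple f g)}"
        using GOOD2[OF lin] by auto
      show "{g \<in> GG0. LINp (ext_tuple f g)} \<subseteq> GG0" by auto
    qed
    show ?thesis using cvx00 i0 eq by blast
  qed
  show ?thesis using part1 part2 by blast
qed


end
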